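(* Let $k$ be a field, $A=kQ_A/I_A$ a monomial algebra, and $B$ the algebra obtained by gluing two distinct non-isolated vertices $e_1,e_n$ of $Q_A$. Suppose either (i) $e_1$ is a source and $e_n$ is a sink, or (ii) $A$ is a radical square zero algebra. Then $\dim_k\mathrm{Im}(\delta^0_A)=\dim_k\mathrm{Im}(\delta^0_B)+1+c_B-c_A$. In particular, if $e_1,e_n$ lie in the same block of $A$, then $\dim_k\mathrm{Im}(\delta^0_A)=\dim_k\mathrm{Im}(\delta^0_B)+1$; if they lie in different blocks, then $\dim_k\mathrm{Im}(\delta^0_A)=\dim_k\mathrm{Im}(\delta^0_B)$.
   Context: Monomial algebra: $A=kQ_A/I_A$ with $Q_A$ a finite quiver and $I_A$ an admissible ideal generated by a minimal set $Z_A$ of paths of length $\ge2$; $\mathcal B_A$ is the set of paths (including trivial ones) avoiding elements of $Z_A$ as subpaths. Radical square zero: $I_A$ generated by all paths of length 2. Source: vertex without incoming arrows; sink: vertex without outgoing arrows. Gluing: $B\subseteq A$ generated by $e_1+e_n$, the remaining vertex idempotents and all arrows; $B\cong kQ_B/I_B$ with $Q_B$ obtained by identifying $e_1,e_n$ and $I_B$ generated by $I_A$ and all newly formed length-2 paths through the identified vertex; $\mathcal B_B$ is its set of basis paths. $c_A,c_B$: numbers of connected components of $Q_A,Q_B$; blocks correspond to components. For path sets $X,Y$, $k(X\|Y)$ has basis the pairs $x\|y$ of parallel paths. For monomial $\Lambda=kQ/\langle Z\rangle$ with basis paths $\mathcal B$, $\delta^0:k(Q_0\|\mathcal B)\to k(Q_1\|\mathcal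 B)$, $e\|\gamma\mapsto\sum_{a\in Q_1,s(a)=e,a\gamma\in\mathcal B}a\|a\gamma-\sum_{a\in Q_1,t(a)=e,\gamma a\in\mathcal B}a\|\gamma a$; $\delta^0_A,\delta^0_B$ are these for $A,B$. *)

theory Defs
  imports "HOL-Analysis.Analysis" "HOL-Library.Function_Algebras"
begin

text \<open>A path is a pair (v, as): its starting vertex v and the list of its arrows in the
  order in which they are traversed; (v, []) is the trivial path e_v.\<close>

type_synonym ('v, 'a) qpath = "'v \<times> 'a list"

definition quiver :: "'v set \<Rightarrow> 'a set \<Rightarrow> ('a \<Rightarrow> 'v) \<Rightarrow> ('a \<Rightarrow> 'v) \<Rightarrow> bool" where
  "quiver V E s t \<longleftrightarrow> finite V \<and> finite E \<and> (\<forall>a\<in>E. s a \<in> V \<and> t a \<in> V)"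

definition arrow_seq :: "'a set \<Rightarrow> ('a \<Rightarrow> 'v) \<Rightarrow> ('a \<Rightarrow> 'v) \<Rightarrow> 'a list \<Rightarrow> bool" where
  "arrow_seq E s t as \<longleftrightarrow> set as \<subseteq> E \<and> (\<forall>i. Suc i < length as \<longrightarrow> t (as ! i) = s (as ! Suc i))"

definition valid_path :: "'v set \<Rightarrow> 'a set \<Rightarrow> ('a \<Rightarrow> 'v) \<Rightarrow> ('a \<Rightarrow> 'v) \<Rightarrow> ('v, 'a) qpath \<Rightarrow> bool" where
  "valid_path V E s t p \<longleftrightarrow> fst p \<in> V \<and> arrow_seq E s t (snd p)
     \<and> (snd p \<noteq> [] \<longrightarrow> s (hd (snd p)) = fst p)"

definition pend :: "('a \<Rightarrow> 'v) \<Rightarrow> ('v, 'a) qpath \<Rightarrow> 'v" where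
  "pend t p = (if snd p = [] then fst p else t (last (snd p)))"

definition contains_sub :: "'a list \<Rightarrow> 'a list \<Rightarrow> bool" where
  "contains_sub as z \<longleftrightarrow> (\<exists>u w. as = u @ z @ w)"

text \<open>Monomial algebra kQ/<Z>: Z a minimal set of paths of length \<ge> 2 generating an admissible ideal.\<close>
definition monomial_data :: "'v set \<Rightarrow> 'a set \<Rightarrow> ('a \<Rightarrow> 'v) \<Rightarrow> ('a \<Rightarrow> 'v) \<Rightarrow> 'a list set \<Rightarrow> bool" where
  "monomial_data V E s t Z \<longleftrightarrow> quiver V E s t
     \<and> (\<forall>z\<in>Z. arrow_seq E s t z \<and> length z \<ge> 2)
     \<and> (\<forall>z\<in>Z. \<forall>z'\<in>Z. contains_sub z' z \<longrightarrow> z = z')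
     \<and> (\<exists>m. \<forall>p. valid_path V E s t p \<and> length (snd p) \<ge> m \<longrightarrow> (\<exists>z\<in>Z. contains_sub (snd p) z))"

definition basis_paths :: "'v set \<Rightarrow> 'a set \<Rightarrow> ('a \<Rightarrow> 'v) \<Rightarrow> ('a \<Rightarrow> 'v) \<Rightarrow> 'a list set \<Rightarrow> ('v, 'a) qpath set" where
  "basis_paths V E s t Z = {p. valid_path V E s t p \<and> (\<forall>z\<in>Z. \<not> contains_sub (snd p) z)}"

text \<open>Basis of k(Q_0 || B): pairs e || gamma with gamma a basis path from e to e.\<close>
definition dom_basis :: "'v set \<Rightarrow> 'a set \<Rightarrow> ('a \<Rightarrow> 'v) \<Rightarrow> ('a \<Rightarrow> 'v) \<Rightarrow> 'a list set \<Rightarrow> ('v \<times> ('v, 'a) qpath) set" where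
  "dom_basis V E s t Z = {(e, g). e \<in> V \<and> g \<in> basis_paths V E s t Z \<and> fst g = e \<and> pend t g = e}"

text \<open>Basis of k(Q_1 || B): pairs a || p with p a basis path parallel to the arrow a.\<close>
definition cod_basis :: "'v set \<Rightarrow> 'a set \<Rightarrow> ('a \<Rightarrow> 'v) \<Rightarrow> ('a \<Rightarrow> 'v) \<Rightarrow> 'a list set \<Rightarrow> ('a \<times> ('v, 'a) qpath) set" where
  "cod_basis V E s t Z = {(a, p). a \<in> E \<and> p \<in> basis_paths V E s t Z \<and> fst p = s a \<and> pend t p = t a}"

text \<open>Paths are multiplied as composition:
  a gamma (with s(a) = e) means "first gamma, then a", i.e. (fst gamma, snd gamma @ [a]);
  gamma a (with t(a) = e) means "first a, then gamma", i.e. (s a, a # snd gamma).\<close>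
definition delta0_coeff :: "'v set \<Rightarrow> 'a set \<Rightarrow> ('a \<Rightarrow> 'v) \<Rightarrow> ('a \<Rightarrow> 'v) \<Rightarrow> 'a list set
    \<Rightarrow> ('v \<times> ('v, 'a) qpath) \<Rightarrow> ('a \<times> ('v, 'a) qpath) \<Rightarrow> 'k::field" where
  "delta0_coeff V E s t Z d c =
    (let (e, g) = d; (a, p) = c; Bs = basis_paths V E s t Z in
      (if a \<in> E \<and> s a = e \<and> p = (fst g, snd g @ [a]) \<and> p \<in> Bs then 1 else 0)
    - (if a \<in> E \<and> t a = e \<and> p = (s a, a # snd g) \<and> p \<in> Bs then 1 else 0))"

text \<open>The k-linear map delta0 : k(Q_0||B) \<rightarrow> k(Q_1||B); vectors are finitely supported
  coefficient functions on the respective bases.\<close>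
definition delta0 :: "'v set \<Rightarrow> 'a set \<Rightarrow> ('a \<Rightarrow> 'v) \<Rightarrow> ('a \<Rightarrow> 'v) \<Rightarrow> 'a list set
    \<Rightarrow> (('v \<times> ('v, 'a) qpath) \<Rightarrow> 'k::field) \<Rightarrow> (('a \<times> ('v, 'a) qpath) \<Rightarrow> 'k)" where
  "delta0 V E s t Z f = (\<lambda>c. if c \<in> cod_basis V E s t Z
      then (\<Sum>d\<in>dom_basis V E s t Z. f d * delta0_coeff V E s t Z d c) else 0)"

definition delta0_image :: "'v set \<Rightarrow> 'a set \<Rightarrow> ('a \<Rightarrow> 'v) \<Rightarrow> ('a \<Rightarrow> 'v) \<Rightarrow> 'a list set
    \<Rightarrow> (('a \<times> ('v, 'a) qpath) \<Rightarrow> 'k::field) set" where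
  "delta0_image V E s t Z =
     delta0 V E s t Z ` {f. \<forall>d. d \<notin> dom_basis V E s t Z \<longrightarrow> f d = 0}"

definition kdim :: "('c \<Rightarrow> 'k::field) set \<Rightarrow> nat" where
  "kdim S = vector_space.dim (\<lambda>(c::'k) f x. c * f x) S"

definition dim_im_delta0 :: "'k::field itself \<Rightarrow> 'v set \<Rightarrow> 'a set \<Rightarrow> ('a \<Rightarrow> 'v) \<Rightarrow> ('a \<Rightarrow> 'v)
    \<Rightarrow> 'a list set \<Rightarrow> nat" where
  "dim_im_delta0 _ V E s t Z = kdim (delta0_image V E s t Z :: (('a \<times> ('v, 'a) qpath) \<Rightarrow> 'k) set)"

definition adj_rel :: "'a set \<Rightarrow> ('a \<Rightarrow> 'v) \<Rightarrow> ('a \<Rightarrow> 'v) \<Rightarrow> ('v \<times> 'v) set" where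
  "adj_rel E s t = (let R = (\<lambda>a. (s a, t a)) ` E in (R \<union> R\<inverse>)\<^sup>*)"

definition num_components :: "'v set \<Rightarrow> 'a set \<Rightarrow> ('a \<Rightarrow> 'v) \<Rightarrow> ('a \<Rightarrow> 'v) \<Rightarrow> nat" where
  "num_components V E s t = card (V // adj_rel E s t)"

definition glue_v :: "'v \<Rightarrow> 'v \<Rightarrow> 'v \<Rightarrow> 'v" where
  "glue_v e1 en v = (if v = en then e1 else v)"

definition glue_V :: "'v set \<Rightarrow> 'v \<Rightarrow> 'v \<Rightarrow> 'v set" where
  "glue_V V e1 en = V - {en}"

definition glue_Z :: "'a set \<Rightarrow> ('a \<Rightarrow> 'v) \<Rightarrow> ('a \<Rightarrow> 'v) \<Rightarrow> 'a list set \<Rightarrow> 'v \<Rightarrow> 'v \<Rightarrow> 'a list set" where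
  "glue_Z E s t Z e1 en = Z \<union> {[a, b] | a b. a \<in> E \<and> b \<in> E
       \<and> glue_v e1 en (t a) = glue_v e1 en (s b) \<and> t a \<noteq> s b}"

definition isolated :: "'a set \<Rightarrow> ('a \<Rightarrow> 'v) \<Rightarrow> ('a \<Rightarrow> 'v) \<Rightarrow> 'v \<Rightarrow> bool" where
  "isolated E s t v \<longleftrightarrow> (\<forall>a\<in>E. s a \<noteq> v \<and> t a \<noteq> v)"

definition is_source :: "'a set \<Rightarrow> ('a \<Rightarrow> 'v) \<Rightarrow> 'v \<Rightarrow> bool" where
  "is_source E t v \<longleftrightarrow> (\<forall>a\<in>E. t a \<noteq> v)"

definition is_sink :: "'a set \<Rightarrow> ('a \<Rightarrow> 'v) \<Rightarrow> 'v \<Rightarrow> bool" where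
  "is_sink E s v \<longleftrightarrow> (\<forall>a\<in>E. s a \<noteq> v)"

definition rad_square_zero :: "'a set \<Rightarrow> ('a \<Rightarrow> 'v) \<Rightarrow> ('a \<Rightarrow> 'v) \<Rightarrow> 'a list set \<Rightarrow> bool" where
  "rad_square_zero E s t Z \<longleftrightarrow> Z = {[a, b] | a b. a \<in> E \<and> b \<in> E \<and> t a = s b}"

end

theory Submission
  imports Defs
begin



interpretation fv: vector_space "(\<lambda>(c::'k::field) (f::'c \<Rightarrow> 'k) x. c * f x)"
  by unfold_locales (auto simp: fun_eq_iff algebra_simps)

lemma kdim_eq: "kdim S = fv.dim S" unfolding kdim_def by simp

lemma sum_fun_apply': "(\<Sum>i\<in>I. (f i :: 'c \<Rightarrow> 'k::field)) x = (\<Sum>i\<in>I. f i x)"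
  by (induction I rule: infinite_finite_induct) auto

lemma in_rangeI_sum: "y = (\<Sum>i\<in>I. (\<lambda>x. c i * g i x)) \<Longrightarrow> y \<in> range (\<lambda>c. \<Sum>i\<in>I. (\<lambda>x. c i * (g i x::'k::field)))"
  by blast

lemma span_image_fin:
  assumes "finite I"
  shows "fv.span (g ` I) = range (\<lambda>c. \<Sum>i\<in>I. (\<lambda>x. c i * (g i x :: 'k::field)))"
proof
  show "range (\<lambda>c. \<Sum>i\<in>I. (\<lambda>x. c i * g i x)) \<subseteq> fv.span (g ` I)"
  proof (clarify)
    fix c
    show "(\<Sum>i\<in>I. (\<lambda>x. c i * g i x)) \<in> fv.span (g ` I)"
      by (rule fv.span_sum) (rule fv.span_scale[OF fv.span_base], simp)
  qed
  show "fv.span (g ` I) \<subseteq> range (\<lambda>c. \<Sum>i\<in>I. (\<lambda>x. c i * g i x))"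
  proof (rule fv.span_minimal)
    show "g ` I \<subseteq> range (\<lambda>c. \<Sum>i\<in>I. (\<lambda>x. c i * g i x))"
    proof
      fix y assume "y \<in> g ` I"
      then obtain j where j: "j \<in> I" "y = g j" by auto
      have "(\<Sum>i\<in>I. (\<lambda>x. (if i = j then 1 else 0) * g i x)) = y"
      proof
        fix x
        have "(\<Sum>i\<in>I. (\<lambda>x. (if i = j then 1 else 0) * g i x)) x = (\<Sum>i\<in>I. (if i = j then g i x else 0))"
          unfolding sum_fun_apply' by (rule sum.cong) simp_all
        also have "\<dots> = y x" using j assms by simp
        finally show "(\<Sum>i\<in>I. (\<lambda>x. (if i = j then 1 else 0) * g i x)) x = y x" .
      qed
      from range_eqI[of y "\<lambda>c. \<Sum>i\<in>I. (\<lambda>x. c i * g i x)" "\<lambda>i. if i = j then 1 else 0", OF sym[OF this]] show "y \<in> range (\<lambda>c. \<Sum>i\<in>I. (\<lambda>x. c i * g i x))" .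
    qed
    show "fv.subspace (range (\<lambda>c. \<Sum>i\<in>I. (\<lambda>x. c i * g i x)))"
      unfolding fv.subspace_def
    proof (intro conjI ballI allI)
      show "0 \<in> range (\<lambda>c. \<Sum>i\<in>I. (\<lambda>x. c i * g i x))"
        by (intro in_rangeI_sum[where c="\<lambda>_. 0"]) (simp add: fun_eq_iff sum_fun_apply')
      fix u w assume "u \<in> range (\<lambda>c. \<Sum>i\<in>I. (\<lambda>x. c i * g i x))" "w \<in> range (\<lambda>c. \<Sum>i\<in>I. (\<lambda>x. c i * g i x))"
      then obtain cu cw where uw: "u = (\<Sum>i\<in>I. (\<lambda>x. cu i * g i x))" "w = (\<Sum>i\<in>I. (\<lambda>x. cw i * g i x))" by blast
      have "u + w = (\<Sum>i\<in>I. (\<lambda>x. (cu i + cw i) * g i x))"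
      proof (rule ext)
        fix x
        show "(u + w) x = (\<Sum>i\<in>I. (\<lambda>x. (cu i + cw i) * g i x)) x"
          unfolding uw sum_fun_apply' plus_fun_apply by (simp only: sum.distrib distrib_right)
      qed
      then show "u + w \<in> range (\<lambda>c. \<Sum>i\<in>I. (\<lambda>x. c i * g i x))"
        by (rule in_rangeI_sum)
    next
      fix a u assume "u \<in> range (\<lambda>c. \<Sum>i\<in>I. (\<lambda>x. c i * g i x))"
      then obtain cu where uu: "u = (\<Sum>i\<in>I. (\<lambda>x. cu i * g i x))" by blast
      have "(\<lambda>x. a * u x) = (\<Sum>i\<in>I. (\<lambda>x. (a * cu i) * g i x))"
      proof (rule ext)
        fix x
        show "a * u x = (\<Sum>i\<in>I. (\<lambda>x. (a * cu i) * g i x)) x"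
          unfolding uu sum_fun_apply' by (simp only: sum_distrib_left mult.assoc)
      qed
      then show "(\<lambda>x. a * u x) \<in> range (\<lambda>c. \<Sum>i\<in>I. (\<lambda>x. c i * g i x))"
        by (rule in_rangeI_sum)
    qed
  qed
qed

lemma dim_image_inj:
  fixes \<Phi> :: "('c \<Rightarrow> 'k::field) \<Rightarrow> ('c \<Rightarrow> 'k)"
  assumes add: "\<And>f g. \<Phi> (f + g) = \<Phi> f + \<Phi> g"
    and sc: "\<And>a f. \<Phi> (\<lambda>x. a * f x) = (\<lambda>x. a * \<Phi> f x)"
    and inj0: "\<And>f. f \<in> fv.span X \<Longrightarrow> \<Phi> f = 0 \<Longrightarrow> f = 0"
  shows "fv.dim (\<Phi> ` X) = fv.dim X"
proof -
  interpret h: module_hom "\<lambda>(c::'k) (f::'c \<Rightarrow> 'k) x. c * f x" "\<lambda>(c::'k) (f::'c \<Rightarrow> 'k) x. c * f x" \<Phi>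
    by unfold_locales (auto simp: add sc fun_eq_iff algebra_simps)
  have inj: "inj_on \<Phi> (fv.span X)" using h.inj_on_iff_eq_0[OF fv.subspace_span] inj0 by auto
  obtain b where b: "b \<subseteq> X" "fv.independent b" "X \<subseteq> fv.span b" "card b = fv.dim X"
    by (rule fv.basis_exists)
  have injb: "inj_on \<Phi> (fv.span b)"
    by (rule inj_on_subset[OF inj]) (rule fv.span_mono[OF b(1)])
  have ind: "fv.independent (\<Phi> ` b)"
    by (rule h.independent_injective_image[OF b(2) injb])
  have sub1: "\<Phi> ` b \<subseteq> \<Phi> ` X" using b(1) by auto
  have sub2: "\<Phi> ` X \<subseteq> fv.span (\<Phi> ` b)" by (rule h.spans_image[OF b(3)])
  have "card (\<Phi> ` b) = card b"
    by (rule card_image, rule inj_on_subset[OF injb fv.span_superset])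
  then show ?thesis using fv.basis_card_eq_dim[OF sub1 sub2 ind] b(4) by simp
qed

lemma dim_insert_gen:
  assumes fin: "finite S"
  shows "fv.dim (insert (x::'c \<Rightarrow> 'k::field) S) = (if x \<in> fv.span S then fv.dim S else fv.dim S + 1)"
proof (cases "x \<in> fv.span S")
  case True
  have "fv.span (insert x S) = fv.span S"
    using True by (simp add: fv.span_redundant)
  then show ?thesis using True fv.span_eq_dim by metis
next
  case False
  obtain b where b: "b \<subseteq> S" "fv.independent b" "S \<subseteq> fv.span b" "card b = fv.dim S"
    by (rule fv.basis_exists)
  have spb: "fv.span b = fv.span S"
    using b by (metis fv.span_mono fv.span_span subset_antisym fv.span_minimal fv.subspace_span)
  have xb: "x \<notin> fv.span b" using False spb by simp
  have ind: "fv.independent (insert x b)" by (rule fv.independent_insertI[OF xb b(2)])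
  have finb: "finite b" using b(1) fin finite_subset by auto
  have xnb: "x \<notin> b" using xb fv.span_superset by blast
  have s1: "insert x b \<subseteq> insert x S" using b(1) by auto
  have s2: "insert x S \<subseteq> fv.span (insert x b)"
    using b(3) fv.span_mono[of b "insert x b"] fv.span_superset[of "insert x b"] by auto
  have "fv.dim (insert x S) = card (insert x b)"
    using fv.basis_card_eq_dim[OF s1 s2 ind] by simp
  also have "\<dots> = fv.dim S + 1" using finb xnb b(4) by simp
  finally show ?thesis using False by simp
qed

definition supp_in :: "('c \<Rightarrow> 'k::zero) \<Rightarrow> 'c set \<Rightarrow> bool" where
  "supp_in f S \<longleftrightarrow> (\<forall>c. f c \<noteq> 0 \<longrightarrow> c \<in> S)"

lemma supp_in_sum:
  assumes "\<And>i. i \<in> I \<Longrightarrow> supp_in (f i) S"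
  shows "supp_in (\<Sum>i\<in>I. (\<lambda>x. u i * (f i x :: 'k::field))) S"
  unfolding supp_in_def sum_fun_apply'
proof (intro allI impI, rule ccontr)
  fix c assume ne: "(\<Sum>i\<in>I. u i * f i c) \<noteq> 0" and c: "c \<notin> S"
  have "\<forall>i\<in>I. u i * f i c = 0" using assms c unfolding supp_in_def by auto
  then have "(\<Sum>i\<in>I. u i * f i c) = 0" by (intro sum.neutral) blast
  then show False using ne by simp
qed

lemma supp_in_disj_zero:
  assumes "supp_in f S1" "supp_in f S2" "S1 \<inter> S2 = {}"
  shows "f = 0"
proof (rule ext)
  fix c show "f c = 0 c"
  proof (rule ccontr)
    assume "f c \<noteq> 0 c"
    then have "c \<in> S1" "c \<in> S2" using assms(1,2) unfolding supp_in_def by auto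
    then show False using assms(3) by auto
  qed
qed

lemma indep_union_supp:
  assumes iX: "fv.independent (bX :: ('c \<Rightarrow> 'k::field) set)" and iY: "fv.independent bY"
    and fX: "finite bX" and fY: "finite bY"
    and sX: "\<And>f. f \<in> bX \<Longrightarrow> supp_in f S1" and sY: "\<And>f. f \<in> bY \<Longrightarrow> supp_in f S2"
    and dj: "S1 \<inter> S2 = {}"
  shows "fv.independent (bX \<union> bY)"
proof -
  have djb: "bX \<inter> bY = {}"
  proof (rule ccontr)
    assume "bX \<inter> bY \<noteq> {}"
    then obtain f where f: "f \<in> bX" "f \<in> bY" by auto
    have "f = 0" using sX[OF f(1)] sY[OF f(2)] dj supp_in_disj_zero by blast
    then show False using f(1) iX fv.dependent_zero by auto
  qed
  show ?thesis
  proof (rule fv.independent_if_scalars_zero)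
    show "finite (bX \<union> bY)" using fX fY by simp
    fix u x
    assume sum0: "(\<Sum>x\<in>bX \<union> bY. (\<lambda>y. u x * x y)) = 0" and x: "x \<in> bX \<union> bY"
    define P where "P = (\<Sum>x\<in>bX. (\<lambda>y. u x * x y))"
    define Q where "Q = (\<Sum>x\<in>bY. (\<lambda>y. u x * x y))"
    have PQ: "P + Q = 0" using sum0 unfolding P_def Q_def
      by (simp add: sum.union_disjoint[OF fX fY djb])
    have sP: "supp_in P S1" unfolding P_def by (rule supp_in_sum) (rule sX)
    have sQ: "supp_in Q S2" unfolding Q_def by (rule supp_in_sum) (rule sY)
    have P0: "P = 0"
    proof (rule ext)
      fix c
      have "P c + Q c = 0" using PQ by (metis plus_fun_apply zero_fun_apply)
      then show "P c = 0 c"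
      proof (cases "c \<in> S1")
        case True
        then have "c \<notin> S2" using dj by auto
        then have "Q c = 0" using sQ unfolding supp_in_def by auto
        then show ?thesis using \<open>P c + Q c = 0\<close> by simp
      next
        case False
        then show ?thesis using sP unfolding supp_in_def by auto
      qed
    qed
    have Q0: "Q = 0" using PQ P0 by simp
    show "u x = 0"
    proof (cases "x \<in> bX")
      case True
      show ?thesis by (rule fv.independentD[OF iX fX order.refl _ True]) (use P0 P_def in simp)
    next
      case False
      then have "x \<in> bY" using x by auto
      show ?thesis by (rule fv.independentD[OF iY fY order.refl _ \<open>x \<in> bY\<close>]) (use Q0 Q_def in simp)
    qed
  qed
qed

lemma dim_union_supp:
  assumes fX: "finite (X :: ('c \<Rightarrow> 'k::field) set)" and fY: "finite Y"
    and sX: "\<And>f. f \<in> X \<Longrightarrow> supp_in f S1" and sY: "\<And>f. f \<in> Y \<Longrightarrow> supp_in f S2"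
    and dj: "S1 \<inter> S2 = {}"
  shows "fv.dim (X \<union> Y) = fv.dim X + fv.dim Y"
proof -
  obtain bX where bX: "bX \<subseteq> X" "fv.independent bX" "X \<subseteq> fv.span bX" "card bX = fv.dim X"
    by (rule fv.basis_exists)
  obtain bY where bY: "bY \<subseteq> Y" "fv.independent bY" "Y \<subseteq> fv.span bY" "card bY = fv.dim Y"
    by (rule fv.basis_exists)
  have fbX: "finite bX" using bX(1) fX finite_subset by auto
  have fbY: "finite bY" using bY(1) fY finite_subset by auto
  have ind: "fv.independent (bX \<union> bY)"
    by (rule indep_union_supp[OF bX(2) bY(2) fbX fbY _ _ dj]) (use bX(1) bY(1) sX sY in auto)
  have djb: "bX \<inter> bY = {}"
  proof (rule ccontr)
    assume "bX \<inter> bY \<noteq> {}"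
    then obtain f where f: "f \<in> bX" "f \<in> bY" by auto
    have "f = 0" using sX sY f bX(1) bY(1) dj supp_in_disj_zero by blast
    then show False using f(1) bX(2) fv.dependent_zero by auto
  qed
  have s1: "bX \<union> bY \<subseteq> X \<union> Y" using bX bY by auto
  have s2: "X \<union> Y \<subseteq> fv.span (bX \<union> bY)"
    using bX(3) bY(3) fv.span_mono[of bX "bX \<union> bY"] fv.span_mono[of bY "bX \<union> bY"] by auto
  have "fv.dim (X \<union> Y) = card (bX \<union> bY)" using fv.basis_card_eq_dim[OF s1 s2 ind] by simp
  also have "\<dots> = card bX + card bY" using card_Un_disjoint[OF fbX fbY djb] .
  finally show ?thesis using bX(4) bY(4) by simp
qed

definition col :: "'v set \<Rightarrow> 'a set \<Rightarrow> ('a \<Rightarrow> 'v) \<Rightarrow> ('a \<Rightarrow> 'v) \<Rightarrow> 'a list set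
    \<Rightarrow> ('v \<times> ('v, 'a) qpath) \<Rightarrow> ('a \<times> ('v, 'a) qpath) \<Rightarrow> 'k::field" where
  "col V E s t Z d = (\<lambda>c. if c \<in> cod_basis V E s t Z then delta0_coeff V E s t Z d c else 0)"

lemma delta0_as_sum:
  "delta0 V E s t Z f = (\<Sum>d\<in>dom_basis V E s t Z. (\<lambda>c. f d * (col V E s t Z d c :: 'k::field)))"
proof (rule ext)
  fix c
  show "delta0 V E s t Z f c = (\<Sum>d\<in>dom_basis V E s t Z. (\<lambda>c. f d * (col V E s t Z d c :: 'k::field))) c"
    unfolding delta0_def col_def sum_fun_apply' by (cases "c \<in> cod_basis V E s t Z") simp_all
qed

lemma image_span:
  assumes fin: "finite (dom_basis V E s t Z)"
  shows "(delta0_image V E s t Z :: (('a \<times> ('v, 'a) qpath) \<Rightarrow> 'k::field) set)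
         = fv.span (col V E s t Z ` dom_basis V E s t Z)"
proof -
  let ?D = "dom_basis V E s t Z"
  have "fv.span ((col V E s t Z :: _ \<Rightarrow> _ \<Rightarrow> 'k) ` ?D) = range (\<lambda>u. \<Sum>d\<in>?D. (\<lambda>c. u d * col V E s t Z d c))"
    by (rule span_image_fin[OF fin])
  also have "\<dots> = delta0_image V E s t Z"
  proof
    show "delta0_image V E s t Z \<subseteq> range (\<lambda>u. \<Sum>d\<in>?D. (\<lambda>c. u d * (col V E s t Z d c :: 'k)))"
      unfolding delta0_image_def delta0_as_sum by blast
    show "range (\<lambda>u. \<Sum>d\<in>?D. (\<lambda>c. u d * (col V E s t Z d c :: 'k))) \<subseteq> delta0_image V E s t Z"
    proof
      fix y assume "y \<in> range (\<lambda>u. \<Sum>d\<in>?D. (\<lambda>c. u d * (col V E s t Z d c :: 'k)))"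
      then obtain u where y: "y = (\<Sum>d\<in>?D. (\<lambda>c. u d * (col V E s t Z d c :: 'k)))" by blast
      define f where "f = (\<lambda>d. if d \<in> ?D then u d else 0)"
      have "delta0 V E s t Z f = y" unfolding delta0_as_sum y f_def by (rule sum.cong) simp_all
      moreover have "\<forall>d. d \<notin> ?D \<longrightarrow> f d = 0" unfolding f_def by simp
      ultimately show "y \<in> delta0_image V E s t Z" unfolding delta0_image_def by blast
    qed
  qed
  finally show ?thesis by simp
qed

lemma dim_im_col:
  assumes fin: "finite (dom_basis V E s t Z)"
  shows "dim_im_delta0 (K::'k::field itself) V E s t Z
         = fv.dim ((col V E s t Z :: _ \<Rightarrow> _ \<Rightarrow> 'k) ` dom_basis V E s t Z)"
  unfolding dim_im_delta0_def kdim_eq image_span[OF fin] fv.dim_span ..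

lemma col_coeff:
  fixes V :: "'v set" and E :: "'a set"
  assumes d: "d \<in> dom_basis V E s t Z"
  shows "(col V E s t Z d :: _ \<Rightarrow> 'k::field) = (\<lambda>c. delta0_coeff V E s t Z d c)"
proof (rule ext)
  fix c :: "'a \<times> ('v, 'a) qpath"
  obtain e g where dd: "d = (e, g)" by (cases d)
  obtain a p where cc: "c = (a, p)" by (cases c)
  have eg: "e \<in> V" "g \<in> basis_paths V E s t Z" "fst g = e" "pend t g = e"
    using d unfolding dd dom_basis_def by auto
  show "(col V E s t Z d c :: 'k) = delta0_coeff V E s t Z d c"
  proof (cases "c \<in> cod_basis V E s t Z")
    case True then show ?thesis unfolding col_def by simp
  next
    case False
    have "delta0_coeff V E s t Z d c = (0::'k)"
    proof -
      have n1: "\<not> (a \<in> E \<and> s a = e \<and> p = (fst g, snd g @ [a]) \<and> p \<in> basis_paths V E s t Z)"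
        using False eg unfolding cc cod_basis_def pend_def by auto
      have n2: "\<not> (a \<in> E \<and> t a = e \<and> p = (s a, a # snd g) \<and> p \<in> basis_paths V E s t Z)"
        using False eg unfolding cc cod_basis_def pend_def by (auto split: if_splits)
      show ?thesis unfolding delta0_coeff_def dd cc Let_def using n1 n2 by simp
    qed
    then show ?thesis unfolding col_def using False by simp
  qed
qed




lemma contains_pair:
  assumes "Suc i < length as"
  shows "contains_sub as [as ! i, as ! Suc i]"
proof -
  have d1: "drop i as = as ! i # drop (Suc i) as" using assms by (simp add: Cons_nth_drop_Suc)
  have d2: "drop (Suc i) as = as ! Suc i # drop (Suc (Suc i)) as" using assms by (simp add: Cons_nth_drop_Suc)
  have "as = take i as @ drop i as" by simp
  also have "\<dots> = take i as @ [as ! i, as ! Suc i] @ drop (Suc (Suc i)) as" using d1 d2 by simp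
  finally have "as = take i as @ [as ! i, as ! Suc i] @ drop (Suc (Suc i)) as" .
  then show ?thesis unfolding contains_sub_def by blast
qed

lemma contains_pairD:
  assumes "contains_sub as [x, y]"
  shows "\<exists>i. Suc i < length as \<and> as ! i = x \<and> as ! Suc i = y"
proof -
  obtain u w where uw: "as = u @ [x, y] @ w" using assms unfolding contains_sub_def by blast
  show ?thesis
    by (rule exI[of _ "length u"]) (simp add: uw nth_append)
qed

lemma contains_sub_Nil: "contains_sub [] z \<Longrightarrow> z = []"
  unfolding contains_sub_def by simp

lemma contains_sub_single: "contains_sub [a] z \<Longrightarrow> length z \<le> 1"
  unfolding contains_sub_def
proof (elim exE)
  fix u w assume "[a] = u @ z @ w"
  then have "length [a] = length (u @ z @ w)" by (rule arg_cong)
  then show "length z \<le> 1" by simp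
qed

lemma finite_basis_paths:
  assumes "finite V" "finite E" "\<And>p. p \<in> basis_paths V E s t Z \<Longrightarrow> length (snd p) \<le> m"
  shows "finite (basis_paths V E s t Z)"
proof -
  have "basis_paths V E s t Z \<subseteq> V \<times> {xs. set xs \<subseteq> E \<and> length xs \<le> m}"
  proof
    fix p assume p: "p \<in> basis_paths V E s t Z"
    then have "fst p \<in> V" "set (snd p) \<subseteq> E" unfolding basis_paths_def valid_path_def arrow_seq_def by auto
    moreover have "length (snd p) \<le> m" using assms(3) p .
    ultimately show "p \<in> V \<times> {xs. set xs \<subseteq> E \<and> length xs \<le> m}" by (cases p) auto
  qed
  moreover have "finite (V \<times> {xs. set xs \<subseteq> E \<and> length xs \<le> m})"
    using assms(1,2) finite_lists_length_le by blast
  ultimately show ?thesis by (rule finite_subset)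
qed

lemma finite_dom_basis:
  assumes "finite V" "finite (basis_paths V E s t Z)"
  shows "finite (dom_basis V E s t Z)"
proof -
  have "dom_basis V E s t Z \<subseteq> V \<times> basis_paths V E s t Z" unfolding dom_basis_def by auto
  then show ?thesis using assms finite_subset by blast
qed

locale glue_setup =
  fixes V :: "'v set" and E :: "'a set" and s t :: "'a \<Rightarrow> 'v" and Z :: "'a list set"
    and e1 en :: 'v
  assumes mono: "monomial_data V E s t Z"
    and e1V: "e1 \<in> V" and enV: "en \<in> V" and dist: "e1 \<noteq> en"
begin

abbreviation "gl \<equiv> glue_v e1 en"
abbreviation "sB \<equiv> glue_v e1 en \<circ> s"
abbreviation "tB \<equiv> glue_v e1 en \<circ> t"
abbreviation "VB \<equiv> glue_V V e1 en"
abbreviation "ZB \<equiv> glue_Z E s t Z e1 en"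

lemma finV: "finite V" and finE: "finite E" and sV: "a \<in> E \<Longrightarrow> s a \<in> V" and tV: "a \<in> E \<Longrightarrow> t a \<in> V"
  using mono unfolding monomial_data_def quiver_def by auto

lemma Zlen: "z \<in> Z \<Longrightarrow> 2 \<le> length z"
  using mono unfolding monomial_data_def by auto

lemma ZBlen: "z \<in> ZB \<Longrightarrow> 2 \<le> length z"
  unfolding glue_Z_def using Zlen by auto

lemma gl_simps: "gl en = e1" "v \<noteq> en \<Longrightarrow> gl v = v"
  unfolding glue_v_def by auto

lemma gl_VB: "v \<in> V \<Longrightarrow> gl v \<in> VB"
  unfolding glue_v_def glue_V_def using e1V dist by auto

lemma VB_sub: "VB \<subseteq> V" unfolding glue_V_def by auto

lemma sB_VB: "a \<in> E \<Longrightarrow> sB a \<in> VB" using gl_VB sV by simp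

lemma ZB_new: "x \<in> E \<Longrightarrow> y \<in> E \<Longrightarrow> gl (t x) = gl (s y) \<Longrightarrow> t x \<noteq> s y \<Longrightarrow> [x, y] \<in> ZB"
  unfolding glue_Z_def by blast

lemma B_basis_A:
  assumes p: "p \<in> basis_paths VB E sB tB ZB" and ne: "snd p \<noteq> []"
  shows "(s (hd (snd p)), snd p) \<in> basis_paths V E s t Z \<and> gl (s (hd (snd p))) = fst p"
proof -
  have v: "fst p \<in> VB" and aseq: "arrow_seq E sB tB (snd p)" and hd: "sB (hd (snd p)) = fst p"
    and av: "\<forall>z\<in>ZB. \<not> contains_sub (snd p) z"
    using p ne unfolding basis_paths_def valid_path_def by auto
  have setE: "set (snd p) \<subseteq> E" using aseq unfolding arrow_seq_def by auto
  have "arrow_seq E s t (snd p)"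
    unfolding arrow_seq_def
  proof (intro conjI allI impI)
    show "set (snd p) \<subseteq> E" by (rule setE)
    fix i assume i: "Suc i < length (snd p)"
    have eqB: "gl (t (snd p ! i)) = gl (s (snd p ! Suc i))"
      using aseq i unfolding arrow_seq_def by auto
    have inE: "snd p ! i \<in> E" "snd p ! Suc i \<in> E" using setE i by auto
    show "t (snd p ! i) = s (snd p ! Suc i)"
    proof (rule ccontr)
      assume "t (snd p ! i) \<noteq> s (snd p ! Suc i)"
      then have "[snd p ! i, snd p ! Suc i] \<in> ZB" using ZB_new inE eqB by blast
      then show False using av contains_pair[OF i] by blast
    qed
  qed
  moreover have "s (hd (snd p)) \<in> V" using sV[OF subsetD[OF setE hd_in_set[OF ne]]] .
  moreover have "\<forall>z\<in>Z. \<not> contains_sub (snd p) z" using av unfolding glue_Z_def by auto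
  ultimately show ?thesis using ne hd unfolding basis_paths_def valid_path_def by auto
qed

lemma A_basis_B:
  assumes p: "p \<in> basis_paths V E s t Z"
  shows "(gl (fst p), snd p) \<in> basis_paths VB E sB tB ZB"
proof -
  have v: "fst p \<in> V" and aseq: "arrow_seq E s t (snd p)" and hd: "snd p \<noteq> [] \<Longrightarrow> s (hd (snd p)) = fst p"
    and av: "\<forall>z\<in>Z. \<not> contains_sub (snd p) z"
    using p unfolding basis_paths_def valid_path_def by auto
  have aseqB: "arrow_seq E sB tB (snd p)" using aseq unfolding arrow_seq_def by auto
  have avB: "\<forall>z\<in>ZB. \<not> contains_sub (snd p) z"
  proof
    fix z assume z: "z \<in> ZB"
    show "\<not> contains_sub (snd p) z"
    proof (cases "z \<in> Z")
      case True then show ?thesis using av by auto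
    next
      case False
      then obtain x y where xy: "z = [x, y]" "t x \<noteq> s y" using z unfolding glue_Z_def by blast
      show ?thesis
      proof
        assume "contains_sub (snd p) z"
        then have "contains_sub (snd p) [x, y]" using xy(1) by simp
        from contains_pairD[OF this] obtain i where i: "Suc i < length (snd p)" "snd p ! i = x" "snd p ! Suc i = y"
          by blast
        have "t (snd p ! i) = s (snd p ! Suc i)" using aseq i(1) unfolding arrow_seq_def by blast
        then show False using xy(2) i(2,3) by simp
      qed
    qed
  qed
  have hdB: "snd p \<noteq> [] \<longrightarrow> sB (hd (snd p)) = gl (fst p)" using hd by simp
  show ?thesis unfolding basis_paths_def valid_path_def mem_Collect_eq fst_conv snd_conv
    using gl_VB[OF v] aseqB avB hdB by blast
qed

lemma adm: "\<exists>m. \<forall>p. valid_path V E s t p \<and> length (snd p) \<ge> m \<longrightarrow> (\<exists>z\<in>Z. contains_sub (snd p) z)"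
  using conjunct2[OF conjunct2[OF conjunct2[OF mono[unfolded monomial_data_def]]]] .

lemma finite_basis_A: "finite (basis_paths V E s t Z)"
proof -
  obtain m where m0: "\<forall>p. valid_path V E s t p \<and> length (snd p) \<ge> m \<longrightarrow> (\<exists>z\<in>Z. contains_sub (snd p) z)"
    using adm by (elim exE)
  note m = m0[rule_format]
  show ?thesis
  proof (rule finite_basis_paths[OF finV finE])
    fix p assume p: "p \<in> basis_paths V E s t Z"
    show "length (snd p) \<le> m"
    proof (rule ccontr)
      assume "\<not> length (snd p) \<le> m"
      then have "valid_path V E s t p \<and> length (snd p) \<ge> m" using p unfolding basis_paths_def by auto
      then obtain z where "z \<in> Z" "contains_sub (snd p) z" using m by blast
      then show False using p unfolding basis_paths_def by blast
    qed
  qed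
qed

lemma finite_basis_B: "finite (basis_paths VB E sB tB ZB)"
proof -
  obtain m where m0: "\<forall>p. valid_path V E s t p \<and> length (snd p) \<ge> m \<longrightarrow> (\<exists>z\<in>Z. contains_sub (snd p) z)"
    using adm by (elim exE)
  note m = m0[rule_format]
  have finVB: "finite VB" using finV VB_sub finite_subset by blast
  show ?thesis
  proof (rule finite_basis_paths[OF finVB finE])
    fix p assume p: "p \<in> basis_paths VB E sB tB ZB"
    show "length (snd p) \<le> m"
    proof (cases "snd p = []")
      case True then show ?thesis by simp
    next
      case False
      have q: "(s (hd (snd p)), snd p) \<in> basis_paths V E s t Z" using B_basis_A[OF p False] by blast
      show ?thesis
      proof (rule ccontr)
        assume "\<not> length (snd p) \<le> m"
        then have "valid_path V E s t (s (hd (snd p)), snd p) \<and> length (snd (s (hd (snd p)), snd p)) \<ge> m"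
          using q unfolding basis_paths_def by auto
        then obtain z where "z \<in> Z" "contains_sub (snd p) z" using m by fastforce
        then show False using q unfolding basis_paths_def by auto
      qed
    qed
  qed
qed

lemma finite_D_A: "finite (dom_basis V E s t Z)"
  by (rule finite_dom_basis[OF finV finite_basis_A])

lemma finite_D_B: "finite (dom_basis VB E sB tB ZB)"
  by (rule finite_dom_basis[OF _ finite_basis_B]) (use finV VB_sub finite_subset in blast)

end




definition inc :: "'a set \<Rightarrow> ('a \<Rightarrow> 'v) \<Rightarrow> ('a \<Rightarrow> 'v) \<Rightarrow> 'v \<Rightarrow> ('a \<times> ('v, 'a) qpath) \<Rightarrow> 'k::field" where
  "inc E s t v = (\<lambda>(a, p). if a \<in> E \<and> p = (s a, [a])
      then (if s a = v then 1 else 0) - (if t a = v then 1 else 0) else 0)"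

definition D1 :: "'v set \<Rightarrow> 'a set \<Rightarrow> ('a \<Rightarrow> 'v) \<Rightarrow> ('a \<Rightarrow> 'v) \<Rightarrow> 'a list set \<Rightarrow> ('v \<times> ('v, 'a) qpath) set" where
  "D1 V E s t Z = {d \<in> dom_basis V E s t Z. snd (snd d) \<noteq> []}"

lemma triv_basis:
  assumes "v \<in> V" "\<forall>z\<in>Z. 2 \<le> length z"
  shows "(v, []) \<in> basis_paths V E s t Z"
  using assms contains_sub_Nil unfolding basis_paths_def valid_path_def arrow_seq_def by fastforce

lemma single_basis:
  assumes "a \<in> E" "s a \<in> V" "\<forall>z\<in>Z. 2 \<le> length z"
  shows "(s a, [a]) \<in> basis_paths V E s t Z"
proof -
  have "\<forall>z\<in>Z. \<not> contains_sub [a] z"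
  proof (intro ballI notI)
    fix z assume "z \<in> Z" "contains_sub [a] z"
    then show False using assms(3) contains_sub_single[of a z] by fastforce
  qed
  then show ?thesis using assms(1,2) unfolding basis_paths_def valid_path_def arrow_seq_def by simp
qed

lemma col_triv:
  fixes V :: "'v set" and E :: "'a set"
  assumes v: "v \<in> V" and sVg: "\<forall>a\<in>E. s a \<in> V" and Zl: "\<forall>z\<in>Z. 2 \<le> length z"
  shows "(col V E s t Z (v, (v, [])) :: _ \<Rightarrow> 'k::field) = inc E s t v"
proof -
  have d: "(v, (v, [])) \<in> dom_basis V E s t Z"
    using triv_basis[OF v Zl] v unfolding dom_basis_def pend_def by simp
  show ?thesis
  proof (rule ext)
    fix c :: "'a \<times> ('v, 'a) qpath"
    obtain a p where cc: "c = (a, p)" by (cases c)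
    show "(col V E s t Z (v, (v, [])) c :: 'k) = inc E s t v c"
    proof (cases "a \<in> E \<and> p = (s a, [a])")
      case True
      then have b: "p \<in> basis_paths V E s t Z" using single_basis[of a E s V Z t] sVg Zl by auto
      show ?thesis unfolding col_coeff[OF d] delta0_coeff_def inc_def cc Let_def
        using True b by auto
    next
      case False
      show ?thesis unfolding col_coeff[OF d] delta0_coeff_def inc_def cc Let_def
        using False by auto
    qed
  qed
qed

lemma split_dim:
  fixes V :: "'v set" and E :: "'a set"
  assumes fin: "finite (dom_basis V E s t Z)" and finV: "finite V"
    and sVg: "\<forall>a\<in>E. s a \<in> V" and Zl: "\<forall>z\<in>Z. 2 \<le> length z"
  shows "dim_im_delta0 (K::'k::field itself) V E s t Z
     = fv.dim ((inc E s t :: _ \<Rightarrow> _ \<Rightarrow> 'k) ` V) + fv.dim ((col V E s t Z :: _ \<Rightarrow> _ \<Rightarrow> 'k) ` D1 V E s t Z)"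
proof -
  let ?D = "dom_basis V E s t Z"
  let ?Dtriv = "(\<lambda>v. (v, (v, [] :: 'a list))) ` V"
  have DD: "?D = ?Dtriv \<union> D1 V E s t Z"
  proof
    show "?D \<subseteq> ?Dtriv \<union> D1 V E s t Z"
    proof
      fix d assume d: "d \<in> ?D"
      obtain e g where dd: "d = (e, g)" by (cases d)
      show "d \<in> ?Dtriv \<union> D1 V E s t Z"
      proof (cases "snd g = []")
        case True
        have "fst g = e" "e \<in> V" using d unfolding dd dom_basis_def by auto
        then have "g = (e, [])" using True by (cases g) auto
        then show ?thesis using \<open>e \<in> V\<close> dd by blast
      next
        case False then show ?thesis using d dd unfolding D1_def by auto
      qed
    qed
    show "?Dtriv \<union> D1 V E s t Z \<subseteq> ?D"
    proof
      fix d assume "d \<in> ?Dtriv \<union> D1 V E s t Z"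
      then show "d \<in> ?D"
      proof (elim UnE)
        assume "d \<in> ?Dtriv"
        then obtain v where v: "v \<in> V" "d = (v, (v, []))" by blast
        then show ?thesis using triv_basis[OF v(1) Zl, of E s t] unfolding dom_basis_def pend_def by simp
      next
        assume "d \<in> D1 V E s t Z" then show ?thesis unfolding D1_def by simp
      qed
    qed
  qed
  have c0: "(col V E s t Z :: _ \<Rightarrow> _ \<Rightarrow> 'k) ` ?Dtriv = inc E s t ` V"
    using col_triv[OF _ sVg Zl] by (auto simp: image_image)
  have img: "(col V E s t Z :: _ \<Rightarrow> _ \<Rightarrow> 'k) ` ?D = inc E s t ` V \<union> col V E s t Z ` D1 V E s t Z"
    unfolding DD image_Un c0 ..
  have s1: "supp_in (f :: _ \<Rightarrow> 'k) {c. length (snd (snd c)) = 1}" if "f \<in> inc E s t ` V" for f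
    using that unfolding supp_in_def inc_def by (auto split: if_splits)
  have s2: "supp_in (f :: _ \<Rightarrow> 'k) {c. 2 \<le> length (snd (snd c))}" if f_in: "f \<in> col V E s t Z ` D1 V E s t Z" for f
  proof -
    obtain d where d: "d \<in> D1 V E s t Z" "f = col V E s t Z d" using f_in by blast
    obtain e g where dd: "d = (e, g)" by (cases d)
    have dD: "d \<in> ?D" and ne: "snd g \<noteq> []" using d(1) unfolding D1_def dd by auto
    show ?thesis unfolding supp_in_def d(2) col_coeff[OF dD]
    proof (intro allI impI)
      fix c :: "'a \<times> ('v, 'a) qpath"
      obtain a p where cc: "c = (a, p)" by (cases c)
      assume "delta0_coeff V E s t Z d c \<noteq> (0::'k)"
      then have "p = (fst g, snd g @ [a]) \<or> p = (s a, a # snd g)"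
        unfolding delta0_coeff_def dd cc Let_def by (auto split: if_splits)
      then show "c \<in> {c. 2 \<le> length (snd (snd c))}" using ne unfolding cc
        by (cases "snd g") auto
    qed
  qed
  have finD1: "finite (D1 V E s t Z)" using fin unfolding D1_def by simp
  show ?thesis
    unfolding dim_im_col[OF fin] img
    by (rule dim_union_supp[OF _ _ s1 s2]) (use finV finD1 in auto)
qed




lemma adj_def2: "adj_rel E s t = (((\<lambda>a. (s a, t a)) ` E) \<union> ((\<lambda>a. (s a, t a)) ` E)\<inverse>)\<^sup>*"
  unfolding adj_rel_def Let_def ..

lemma adj_arrow: "a \<in> E \<Longrightarrow> (s a, t a) \<in> adj_rel E s t" "a \<in> E \<Longrightarrow> (t a, s a) \<in> adj_rel E s t"
  unfolding adj_def2 by auto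

lemma adj_sym: "(x, y) \<in> adj_rel E s t \<Longrightarrow> (y, x) \<in> adj_rel E s t"
proof -
  have "sym (((\<lambda>a. (s a, t a)) ` E) \<union> ((\<lambda>a. (s a, t a)) ` E)\<inverse>)" by (rule sym_Un_converse)
  then have "sym (adj_rel E s t)" unfolding adj_def2 by (rule sym_rtrancl)
  then show "(x, y) \<in> adj_rel E s t \<Longrightarrow> (y, x) \<in> adj_rel E s t" by (rule symD)
qed

lemma adj_trans: "(x, y) \<in> adj_rel E s t \<Longrightarrow> (y, z) \<in> adj_rel E s t \<Longrightarrow> (x, z) \<in> adj_rel E s t"
  unfolding adj_def2 by (rule rtrancl_trans)

lemma adj_const:
  assumes "(x, w) \<in> adj_rel E s t" and f: "\<forall>a\<in>E. f (s a) = f (t a)"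
  shows "f w = f x"
  using assms(1) unfolding adj_def2
proof (induction rule: rtrancl_induct)
  case base then show ?case by simp
next
  case (step y z)
  then show ?case using f by auto
qed

context glue_setup begin

definition Phi :: "(('a \<times> ('v, 'a) qpath) \<Rightarrow> 'k::field) \<Rightarrow> (('a \<times> ('v, 'a) qpath) \<Rightarrow> 'k)" where
  "Phi f = (\<lambda>(a, (w, l)). if w = sB a then f (a, (s a, l)) else 0)"

lemma Phi_inc:
  assumes "v \<noteq> e1" "v \<noteq> en"
  shows "Phi (inc E s t v :: _ \<Rightarrow> 'k::field) = inc E sB tB v"
proof (rule ext)
  fix c :: "'a \<times> ('v, 'a) qpath"
  obtain a w l where cc: "c = (a, (w, l))" by (cases c) auto
  have "sB a = v \<longleftrightarrow> s a = v" "tB a = v \<longleftrightarrow> t a = v" using assms unfolding glue_v_def by auto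
  then show "Phi (inc E s t v :: _ \<Rightarrow> 'k) c = inc E sB tB v c"
    unfolding Phi_def inc_def cc by auto
qed

lemma Phi_inc1:
  "Phi (inc E s t e1 + inc E s t en :: _ \<Rightarrow> 'k::field) = inc E sB tB e1"
proof (rule ext)
  fix c :: "'a \<times> ('v, 'a) qpath"
  obtain a w l where cc: "c = (a, (w, l))" by (cases c) auto
  have "sB a = e1 \<longleftrightarrow> s a = e1 \<or> s a = en" "tB a = e1 \<longleftrightarrow> t a = e1 \<or> t a = en"
    using dist unfolding glue_v_def by auto
  then show "Phi (inc E s t e1 + inc E s t en :: _ \<Rightarrow> 'k) c = inc E sB tB e1 c"
    unfolding Phi_def inc_def cc using dist by auto
qed

definition WW :: "(('a \<times> ('v, 'a) qpath) \<Rightarrow> 'k::field) set" where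
  "WW = {f. \<forall>a w l. f (a, (w, l)) \<noteq> 0 \<longrightarrow> w = s a}"

lemma add_ne0: "(p::'k::field) + q \<noteq> 0 \<Longrightarrow> p \<noteq> 0 \<or> q \<noteq> 0" by auto

lemma WW_sub: "fv.subspace (WW :: (_ \<Rightarrow> 'k::field) set)"
  unfolding fv.subspace_def WW_def by (auto dest!: add_ne0; blast)

lemma inc_WW: "(inc E s t v :: _ \<Rightarrow> 'k::field) \<in> WW"
  unfolding WW_def inc_def by auto

lemma Phi_inj0:
  assumes "f \<in> (WW :: (_ \<Rightarrow> 'k::field) set)" "Phi f = 0"
  shows "f = 0"
proof (rule ext)
  fix c :: "'a \<times> ('v, 'a) qpath"
  obtain a w l where cc: "c = (a, (w, l))" by (cases c) auto
  show "f c = 0 c"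
  proof (rule ccontr)
    assume ne: "f c \<noteq> 0 c"
    then have ws: "w = s a" using assms(1) unfolding WW_def cc by auto
    have "Phi f (a, (sB a, l)) = f (a, (s a, l))" unfolding Phi_def by simp
    then show False using assms(2) ne ws cc by simp
  qed
qed

lemma T_dim_B:
  "fv.dim ((inc E sB tB :: _ \<Rightarrow> _ \<Rightarrow> 'k::field) ` VB)
   = fv.dim (insert (inc E s t e1 + inc E s t en) ((inc E s t :: _ \<Rightarrow> _ \<Rightarrow> 'k) ` (V - {e1, en})))"
proof -
  let ?S = "insert (inc E s t e1 + inc E s t en) ((inc E s t :: _ \<Rightarrow> _ \<Rightarrow> 'k) ` (V - {e1, en}))"
  have VBe: "VB = insert e1 (V - {e1, en})" unfolding glue_V_def using e1V dist by auto
  have img: "(inc E sB tB :: _ \<Rightarrow> _ \<Rightarrow> 'k) ` VB = Phi ` ?S"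
    unfolding VBe using Phi_inc Phi_inc1 by (auto simp: image_image)
  have SW: "?S \<subseteq> WW"
    using inc_WW fv.subspace_add[OF WW_sub inc_WW inc_WW] by auto
  have spW: "fv.span ?S \<subseteq> WW" by (rule fv.span_minimal[OF SW WW_sub])
  show ?thesis unfolding img
  proof (rule dim_image_inj)
    show "Phi (f + g) = Phi f + Phi g" for f g :: "_ \<Rightarrow> 'k"
      unfolding Phi_def by (auto simp: fun_eq_iff)
    show "Phi (\<lambda>x. a * f x) = (\<lambda>x. a * Phi f x)" for a and f :: "_ \<Rightarrow> 'k"
      unfolding Phi_def by (auto simp: fun_eq_iff)
    show "f \<in> fv.span ?S \<Longrightarrow> Phi f = 0 \<Longrightarrow> f = 0" for f
      using Phi_inj0 spW by blast
  qed
qed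


lemma inc_sum:
  assumes "finite C"
  shows "(\<Sum>v\<in>C. (inc E s t v :: _ \<Rightarrow> 'k::field)) (a, p)
    = (if a \<in> E \<and> p = (s a, [a]) then (if s a \<in> C then 1 else 0) - (if t a \<in> C then 1 else 0) else 0)"
proof (cases "a \<in> E \<and> p = (s a, [a])")
  case True
  have "(\<Sum>v\<in>C. (inc E s t v :: _ \<Rightarrow> 'k)) (a, p)
      = (\<Sum>v\<in>C. (if s a = v then 1 else 0) - (if t a = v then (1::'k) else 0))"
    unfolding sum_fun_apply' inc_def using True by simp
  also have "\<dots> = (\<Sum>v\<in>C. (if s a = v then 1 else 0)) - (\<Sum>v\<in>C. (if t a = v then (1::'k) else 0))"
    by (rule sum_subtractf)
  also have "\<dots> = (if s a \<in> C then 1 else 0) - (if t a \<in> C then 1 else 0)"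
    using assms by simp
  finally show ?thesis using True by simp
next
  case False
  have "\<forall>v. (inc E s t v :: _ \<Rightarrow> 'k) (a, p) = 0" using False unfolding inc_def by auto
  then show ?thesis using False by (simp add: sum_fun_apply')
qed

lemma e1_refl: "(x, x) \<in> adj_rel E s t" unfolding adj_def2 by simp

lemma x_in_span_disconn:
  assumes nc: "(e1, en) \<notin> adj_rel E s t"
  shows "(inc E s t e1 :: _ \<Rightarrow> 'k::field)
     \<in> fv.span (insert (inc E s t e1 + inc E s t en) ((inc E s t :: _ \<Rightarrow> _ \<Rightarrow> 'k) ` (V - {e1, en})))"
proof -
  let ?S = "insert (inc E s t e1 + inc E s t en) ((inc E s t :: _ \<Rightarrow> _ \<Rightarrow> 'k) ` (V - {e1, en}))"
  define C where "C = {v \<in> V. (e1, v) \<in> adj_rel E s t}"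
  have finC: "finite C" unfolding C_def using finV by simp
  have e1C: "e1 \<in> C" unfolding C_def using e1V e1_refl by simp
  have enC: "en \<notin> C" unfolding C_def using nc by simp
  have closed: "s a \<in> C \<longleftrightarrow> t a \<in> C" if a: "a \<in> E" for a
  proof
    assume "s a \<in> C"
    then have "(e1, s a) \<in> adj_rel E s t" unfolding C_def by simp
    then have "(e1, t a) \<in> adj_rel E s t" by (rule adj_trans[OF _ adj_arrow(1)[where s=s and t=t, OF a]])
    then show "t a \<in> C" unfolding C_def using tV[OF a] by simp
  next
    assume "t a \<in> C"
    then have "(e1, t a) \<in> adj_rel E s t" unfolding C_def by simp
    then have "(e1, s a) \<in> adj_rel E s t" by (rule adj_trans[OF _ adj_arrow(2)[where s=s and t=t, OF a]])
    then show "s a \<in> C" unfolding C_def using sV[OF a] by simp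
  qed
  have sum0: "(\<Sum>v\<in>C. (inc E s t v :: _ \<Rightarrow> 'k)) = 0"
  proof (rule ext)
    fix c :: "'a \<times> ('v, 'a) qpath"
    obtain a p where cc: "c = (a, p)" by (cases c)
    show "(\<Sum>v\<in>C. (inc E s t v :: _ \<Rightarrow> 'k)) c = 0 c"
      unfolding cc inc_sum[OF finC] using closed by auto
  qed
  have split: "(\<Sum>v\<in>C. (inc E s t v :: _ \<Rightarrow> 'k)) = inc E s t e1 + (\<Sum>v\<in>C - {e1}. inc E s t v)"
    by (rule sum.remove[OF finC e1C])
  have xe: "inc E s t e1 = - (\<Sum>v\<in>C - {e1}. (inc E s t v :: _ \<Rightarrow> 'k))"
    using sum0 split by (simp add: eq_neg_iff_add_eq_0)
  have "(\<Sum>v\<in>C - {e1}. (inc E s t v :: _ \<Rightarrow> 'k)) \<in> fv.span ?S"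
  proof (rule fv.span_sum)
    fix v assume "v \<in> C - {e1}"
    then have "v \<in> V - {e1, en}" using enC unfolding C_def by auto
    then show "inc E s t v \<in> fv.span ?S" by (intro fv.span_base) auto
  qed
  then show ?thesis unfolding xe by (rule fv.span_neg)
qed

lemma x_notin_span_conn:
  assumes cn: "(e1, en) \<in> adj_rel E s t"
  shows "(inc E s t e1 :: _ \<Rightarrow> 'k::field)
     \<notin> fv.span (insert (inc E s t e1 + inc E s t en) ((inc E s t :: _ \<Rightarrow> _ \<Rightarrow> 'k) ` (V - {e1, en})))"
proof
  let ?x = "inc E s t e1 :: _ \<Rightarrow> 'k"
  let ?y = "inc E s t en :: _ \<Rightarrow> 'k"
  define I where "I = V - {en}"
  define g where "g v = (if v = e1 then ?x + ?y else inc E s t v)" for v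
  have finI: "finite I" unfolding I_def using finV by simp
  have e1I: "e1 \<in> I" unfolding I_def using e1V dist by simp
  have SI: "insert (?x + ?y) ((inc E s t :: _ \<Rightarrow> _ \<Rightarrow> 'k) ` (V - {e1, en})) = g ` I"
  proof -
    have "I = insert e1 (V - {e1, en})" unfolding I_def using e1V dist by auto
    then have A: "g ` I = insert (g e1) (g ` (V - {e1, en}))" by simp
    have C: "g ` (V - {e1, en}) = inc E s t ` (V - {e1, en})"
      unfolding g_def by (rule image_cong) auto
    have ge1: "g e1 = ?x + ?y" unfolding g_def by (rule if_P) (rule refl)
    have "g ` I = insert (?x + ?y) (inc E s t ` (V - {e1, en}))" using A C ge1 by (simp only:)
    then show ?thesis by (rule sym)
  qed
  assume "?x \<in> fv.span (insert (?x + ?y) ((inc E s t :: _ \<Rightarrow> _ \<Rightarrow> 'k) ` (V - {e1, en})))"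
  then have "?x \<in> range (\<lambda>c. \<Sum>i\<in>I. (\<lambda>z. c i * g i z))"
    unfolding SI span_image_fin[OF finI] .
  then obtain c where xc: "?x = (\<Sum>i\<in>I. (\<lambda>z. c i * g i z))" by blast
  define ind :: "bool \<Rightarrow> 'k" where "ind P = (if P then 1 else 0)" for P
  define h where "h v = (if v = en then c e1 else c v)" for v
  define f where "f v = h v - ind (v = e1)" for v
  have key: "f (s a) = f (t a)" if a: "a \<in> E" for a
  proof -
    let ?z = "(a, (s a, [a]))"
    have gz: "g v ?z = ind (s a = v) - ind (t a = v) + (if v = e1 then ind (s a = en) - ind (t a = en) else 0)" for v
      unfolding g_def inc_def ind_def using a by auto
    have "?x ?z = ind (s a = e1) - ind (t a = e1)" unfolding inc_def ind_def using a by simp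
    moreover have "?x ?z = (\<Sum>i\<in>I. c i * g i ?z)"
    proof -
      have "?x ?z = (\<Sum>i\<in>I. (\<lambda>z. c i * g i z)) ?z" by (subst xc) (rule refl)
      then show ?thesis by (simp only: sum_fun_apply')
    qed
    moreover have "(\<Sum>i\<in>I. c i * g i ?z) = h (s a) - h (t a)"
    proof -
      have "(\<Sum>i\<in>I. c i * g i ?z)
          = (\<Sum>i\<in>I. (if s a = i then c i else 0) - (if t a = i then c i else 0)
                     + (if e1 = i then c e1 * (ind (s a = en) - ind (t a = en)) else 0))"
        unfolding gz by (rule sum.cong) (auto simp: ind_def algebra_simps)
      also have "\<dots> = (\<Sum>i\<in>I. (if s a = i then c i else 0)) - (\<Sum>i\<in>I. (if t a = i then c i else 0))
                     + (\<Sum>i\<in>I. (if e1 = i then c e1 * (ind (s a = en) - ind (t a = en)) else 0))"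
        by (simp only: sum.distrib sum_subtractf)
      also have "\<dots> = (if s a \<in> I then c (s a) else 0) - (if t a \<in> I then c (t a) else 0)
                     + c e1 * (ind (s a = en) - ind (t a = en))"
        using finI e1I by simp
      also have "\<dots> = h (s a) - h (t a)"
        using sV[OF a] tV[OF a] unfolding h_def ind_def I_def by (auto simp: algebra_simps)
      finally show ?thesis .
    qed
    ultimately have "h (s a) - h (t a) = ind (s a = e1) - ind (t a = e1)" by simp
    then show ?thesis unfolding f_def by (simp add: algebra_simps)
  qed
  have "f en = f e1" by (rule adj_const[OF cn]) (use key in blast)
  then show False unfolding f_def h_def ind_def using dist by simp
qed

lemma T_main:
  "fv.dim ((inc E s t :: _ \<Rightarrow> _ \<Rightarrow> 'k::field) ` V)
   = fv.dim ((inc E sB tB :: _ \<Rightarrow> _ \<Rightarrow> 'k) ` VB) + (if (e1, en) \<in> adj_rel E s t then 1 else 0)"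
proof -
  let ?x = "inc E s t e1 :: _ \<Rightarrow> 'k"
  let ?y = "inc E s t en :: _ \<Rightarrow> 'k"
  let ?T = "(inc E s t :: _ \<Rightarrow> _ \<Rightarrow> 'k) ` (V - {e1, en})"
  let ?S = "insert (?x + ?y) ?T"
  have finS: "finite ?S" using finV by simp
  have Veq: "(inc E s t :: _ \<Rightarrow> _ \<Rightarrow> 'k) ` V = insert ?x (insert ?y ?T)"
  proof -
    have "V = insert e1 (insert en (V - {e1, en}))" using e1V enV by auto
    then show ?thesis by (metis image_insert)
  qed
  have "fv.span ((inc E s t :: _ \<Rightarrow> _ \<Rightarrow> 'k) ` V) = fv.span (insert ?x ?S)"
    unfolding Veq fv.span_eq
  proof
    have "?y = (?x + ?y) - ?x" by simp
    moreover have "(?x + ?y) - ?x \<in> fv.span (insert ?x ?S)"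
      by (intro fv.span_diff fv.span_base) auto
    ultimately have "?y \<in> fv.span (insert ?x ?S)" by simp
    then show "insert ?x (insert ?y ?T) \<subseteq> fv.span (insert ?x ?S)"
      using fv.span_superset[of "insert ?x ?S"] by auto
    have "?x + ?y \<in> fv.span (insert ?x (insert ?y ?T))"
      by (intro fv.span_add fv.span_base) auto
    then show "insert ?x ?S \<subseteq> fv.span (insert ?x (insert ?y ?T))"
      using fv.span_superset[of "insert ?x (insert ?y ?T)"] by auto
  qed
  then have "fv.dim ((inc E s t :: _ \<Rightarrow> _ \<Rightarrow> 'k) ` V) = fv.dim (insert ?x ?S)"
    by (rule fv.span_eq_dim)
  also have "\<dots> = (if ?x \<in> fv.span ?S then fv.dim ?S else fv.dim ?S + 1)"
    by (rule dim_insert_gen[OF finS])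
  also have "\<dots> = fv.dim ?S + (if (e1, en) \<in> adj_rel E s t then 1 else 0)"
    using x_in_span_disconn x_notin_span_conn by auto
  finally show ?thesis using T_dim_B[where 'k='k] by simp
qed

end




lemma card_image_rel:
  assumes fin: "finite A" and eq: "\<And>x y. x \<in> A \<Longrightarrow> y \<in> A \<Longrightarrow> F x = F y \<longleftrightarrow> G x = G y"
  shows "card (F ` A) = card (G ` A)"
proof -
  define h where "h c = F (inv_into A G c)" for c
  have hG: "h (G x) = F x" if x: "x \<in> A" for x
  proof -
    have i: "inv_into A G (G x) \<in> A" using x by (simp add: inv_into_into)
    have "G (inv_into A G (G x)) = G x" using x by (simp add: f_inv_into_f)
    then show ?thesis unfolding h_def using eq[OF i x] by simp
  qed
  have "F ` A = (\<lambda>x. h (G x)) ` A" by (rule image_cong) (simp_all add: hG)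
  then have img: "F ` A = h ` (G ` A)" by (simp only: image_image)
  have inj: "inj_on h (G ` A)"
  proof (rule inj_onI)
    fix c d
    assume c: "c \<in> G ` A" and d: "d \<in> G ` A" and hcd: "h c = h d"
    from c obtain x where x: "x \<in> A" "c = G x" by (rule imageE)
    from d obtain y where y: "y \<in> A" "d = G y" by (rule imageE)
    have "F x = F y" using hcd hG[OF x(1)] hG[OF y(1)] x(2) y(2) by simp
    then show "c = d" using eq[OF x(1) y(1)] x(2) y(2) by simp
  qed
  show ?thesis unfolding img by (rule card_image[OF inj])
qed

lemma equiv_rtrancl_sym: "sym S \<Longrightarrow> equiv UNIV (S\<^sup>*)"
  unfolding equiv_def by (intro conjI refl_rtrancl sym_rtrancl trans_rtrancl) auto

lemma adj_equiv: "equiv UNIV (adj_rel E s t)"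
  unfolding adj_def2 by (rule equiv_rtrancl_sym) (rule sym_Un_converse)

lemma adj_class_eq: "adj_rel E s t `` {x} = adj_rel E s t `` {y} \<longleftrightarrow> (x, y) \<in> adj_rel E s t"
  using equiv_class_eq_iff[OF adj_equiv[of E s t], of x y] by simp

lemma adj_refl: "(x, x) \<in> adj_rel E s t" unfolding adj_def2 by simp

lemma quot_img: "A // r = (\<lambda>x. r `` {x}) ` A"
  unfolding quotient_def by auto

context glue_setup begin

definition RA' :: "'v rel" where
  "RA' = (((\<lambda>a. (s a, t a)) ` E) \<union> ((\<lambda>a. (s a, t a)) ` E)\<inverse> \<union> {(e1, en), (en, e1)})\<^sup>*"

lemma RA'_equiv: "equiv UNIV RA'"
  unfolding RA'_def by (rule equiv_rtrancl_sym) (auto simp: sym_def)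

lemma RA'_class_eq: "RA' `` {x} = RA' `` {y} \<longleftrightarrow> (x, y) \<in> RA'"
  using equiv_class_eq_iff[OF RA'_equiv] by blast

lemma RA'_trans: "(x, y) \<in> RA' \<Longrightarrow> (y, z) \<in> RA' \<Longrightarrow> (x, z) \<in> RA'"
  unfolding RA'_def by (rule rtrancl_trans)

lemma RA'_sym: "(x, y) \<in> RA' \<Longrightarrow> (y, x) \<in> RA'"
  using RA'_equiv unfolding equiv_def sym_def by blast

lemma RA_sub: "(x, y) \<in> adj_rel E s t \<Longrightarrow> (x, y) \<in> RA'"
  unfolding RA'_def adj_def2 by (rule rtrancl_mono[THEN subsetD]) auto

lemma RA'_e: "(e1, en) \<in> RA'" "(en, e1) \<in> RA'"
  unfolding RA'_def by auto

lemma gl_eq: "gl x = gl y \<Longrightarrow> x = y \<or> (x = e1 \<and> y = en) \<or> (x = en \<and> y = e1)"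
  unfolding glue_v_def by (auto split: if_splits)

lemma RA'_refl: "(x, x) \<in> RA'" unfolding RA'_def by simp

lemma base_fact: "gl x = gl y \<Longrightarrow> (x, y) \<in> RA'"
  using gl_eq[of x y] RA'_e RA'_refl by auto

lemma G1a: "(x, y) \<in> RA' \<Longrightarrow> (gl x, gl y) \<in> adj_rel E sB tB"
  unfolding RA'_def
proof (induction rule: rtrancl_induct)
  case base then show ?case by (rule adj_refl)
next
  case (step y z)
  have "(gl y, gl z) \<in> adj_rel E sB tB"
    using step(2)
  proof (elim UnE)
    assume "(y, z) \<in> (\<lambda>a. (s a, t a)) ` E"
    then obtain a where "a \<in> E" "y = s a" "z = t a" by blast
    then show ?thesis using adj_arrow(1)[where E=E and s=sB and t=tB] by simp
  next
    assume "(y, z) \<in> ((\<lambda>a. (s a, t a)) ` E)\<inverse>"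
    then obtain a where "a \<in> E" "z = s a" "y = t a" by blast
    then show ?thesis using adj_arrow(2)[where E=E and s=sB and t=tB] by simp
  next
    assume "(y, z) \<in> {(e1, en), (en, e1)}"
    then have "gl y = gl z" using gl_simps(1) gl_simps(2)[OF dist] by auto
    then show ?thesis using adj_refl by simp
  qed
  then show ?case by (rule adj_trans[OF step(3)])
qed

lemma G1b: "(u, w) \<in> adj_rel E sB tB \<Longrightarrow> \<forall>x y. gl x = u \<longrightarrow> gl y = w \<longrightarrow> (x, y) \<in> RA'"
  unfolding adj_def2
proof (induction rule: rtrancl_induct)
  case base
  then show ?case using base_fact by simp
next
  case (step w z)
  from step(2) obtain a where a: "a \<in> E" and wz: "(w = sB a \<and> z = tB a) \<or> (w = tB a \<and> z = sB a)"
    by (elim UnE imageE converseE) (auto simp del: comp_apply)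
  show ?case
  proof (intro allI impI)
    fix x y assume x: "gl x = u" and y: "gl y = z"
    show "(x, y) \<in> RA'"
    proof (cases "w = sB a \<and> z = tB a")
      case True
      have A: "(x, s a) \<in> RA'" using step(3) x True by simp
      have B: "(s a, t a) \<in> RA'" by (rule RA_sub[OF adj_arrow(1)[OF a]])
      have C: "(t a, y) \<in> RA'" using base_fact y True by simp
      show ?thesis by (rule RA'_trans[OF RA'_trans[OF A B] C])
    next
      case False
      then have F: "w = tB a" "z = sB a" using wz by auto
      have A: "(x, t a) \<in> RA'" using step(3) x F by simp
      have B: "(t a, s a) \<in> RA'" by (rule RA_sub[OF adj_arrow(2)[OF a]])
      have C: "(s a, y) \<in> RA'" using base_fact y F by simp
      show ?thesis by (rule RA'_trans[OF RA'_trans[OF A B] C])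
    qed
  qed
qed

lemma G1: "(gl x, gl y) \<in> adj_rel E sB tB \<longleftrightarrow> (x, y) \<in> RA'"
  using G1a G1b by blast


abbreviation "RA \<equiv> adj_rel E s t"

lemma RA_refl: "(x, x) \<in> RA" by (rule adj_refl)
lemma RA_sym: "(x, y) \<in> RA \<Longrightarrow> (y, x) \<in> RA" by (rule adj_sym)
lemma RA_trans: "(x, y) \<in> RA \<Longrightarrow> (y, z) \<in> RA \<Longrightarrow> (x, z) \<in> RA" by (rule adj_trans)
lemma RA_arrow: "a \<in> E \<Longrightarrow> (s a, t a) \<in> RA" "a \<in> E \<Longrightarrow> (t a, s a) \<in> RA"
  by (rule adj_arrow, assumption)+
lemma RA_class_eq: "RA `` {x} = RA `` {y} \<longleftrightarrow> (x, y) \<in> RA" by (rule adj_class_eq)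

lemma VB_img: "VB = gl ` V"
proof
  show "gl ` V \<subseteq> VB" using gl_VB by blast
  show "VB \<subseteq> gl ` V"
  proof
    fix v assume v: "v \<in> VB"
    then have "v \<in> V" "v \<noteq> en" unfolding glue_V_def by auto
    then show "v \<in> gl ` V" using gl_simps(2)[of v] by (metis image_eqI)
  qed
qed

lemma cB_eq: "num_components VB E sB tB = card (V // RA')"
proof -
  have "VB // adj_rel E sB tB = (\<lambda>x. adj_rel E sB tB `` {gl x}) ` V"
    unfolding quot_img VB_img image_image ..
  moreover have "card ((\<lambda>x. adj_rel E sB tB `` {gl x}) ` V) = card ((\<lambda>x. RA' `` {x}) ` V)"
  proof (rule card_image_rel[OF finV])
    fix x y
    show "(adj_rel E sB tB `` {gl x} = adj_rel E sB tB `` {gl y}) = (RA' `` {x} = RA' `` {y})"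
      unfolding adj_class_eq RA'_class_eq G1 ..
  qed
  ultimately show ?thesis unfolding num_components_def quot_img by simp
qed

lemma G3: "(u, w) \<in> RA' \<Longrightarrow> (u, w) \<in> RA \<or> ((u, e1) \<in> RA \<and> (en, w) \<in> RA) \<or> ((u, en) \<in> RA \<and> (e1, w) \<in> RA)"
  unfolding RA'_def
proof (induction rule: rtrancl_induct)
  case base then show ?case using RA_refl by blast
next
  case (step y z)
  show ?case
  proof (cases "(y, z) \<in> RA")
    case True
    have "(u, y) \<in> RA \<Longrightarrow> (u, z) \<in> RA" using RA_trans True by blast
    moreover have "(en, y) \<in> RA \<Longrightarrow> (en, z) \<in> RA" using RA_trans True by blast
    moreover have "(e1, y) \<in> RA \<Longrightarrow> (e1, z) \<in> RA" using RA_trans True by blast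
    ultimately show ?thesis using step(3) by blast
  next
    case False
    then have yz: "(y = e1 \<and> z = en) \<or> (y = en \<and> z = e1)"
      using step(2) RA_arrow by blast
    show ?thesis
    proof (cases "y = e1 \<and> z = en")
      case True
      show ?thesis using step(3)
      proof (elim disjE conjE)
        assume "(u, y) \<in> RA" then show ?thesis using True RA_refl by blast
      next
        assume "(u, e1) \<in> RA" "(en, y) \<in> RA"
        then have "(u, en) \<in> RA" using True RA_sym RA_trans by blast
        then show ?thesis using True by blast
      next
        assume "(u, en) \<in> RA" "(e1, y) \<in> RA"
        then show ?thesis using True by blast
      qed
    next
      case False
      then have T: "y = en" "z = e1" using yz by auto
      show ?thesis using step(3)
      proof (elim disjE conjE)
        assume "(u, y) \<in> RA" then show ?thesis using T RA_refl by blast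
      next
        assume "(u, e1) \<in> RA" "(en, y) \<in> RA"
        then show ?thesis using T by blast
      next
        assume "(u, en) \<in> RA" "(e1, y) \<in> RA"
        then have "(u, e1) \<in> RA" using T RA_sym RA_trans by blast
        then show ?thesis using T by blast
      qed
    qed
  qed
qed

lemma conn_case:
  assumes c: "(e1, en) \<in> RA"
  shows "num_components VB E sB tB = num_components V E s t"
proof -
  have "RA' = RA"
  proof
    show "RA \<subseteq> RA'" using RA_sub by auto
    show "RA' \<subseteq> RA"
    proof
      fix p assume p: "p \<in> RA'"
      obtain u w where pp: "p = (u, w)" by (cases p)
      have ce: "(en, e1) \<in> RA" using RA_sym[OF c] .
      show "p \<in> RA" using G3[OF p[unfolded pp]] c ce RA_trans unfolding pp by blast
    qed
  qed
  then have "num_components VB E sB tB = card (V // RA)" using cB_eq by simp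
  then show ?thesis by (simp add: num_components_def)
qed

lemma disconn_case:
  assumes nc: "(e1, en) \<notin> RA"
  shows "num_components V E s t = num_components VB E sB tB + 1"
proof -
  define \<sigma> where "\<sigma> x = (if (en, x) \<in> RA then e1 else x)" for x
  have ne1: "(en, e1) \<notin> RA" using nc RA_sym by blast
  have sig_nc: "(en, \<sigma> x) \<notin> RA" for x unfolding \<sigma>_def using ne1 by auto
  have sig_rel: "(x, \<sigma> x) \<in> RA'" for x
  proof (cases "(en, x) \<in> RA")
    case True
    have "(x, en) \<in> RA'" using RA_sub RA_sym[OF True] by blast
    then show ?thesis unfolding \<sigma>_def using True RA'_e(2) RA'_trans by auto
  next
    case False then show ?thesis unfolding \<sigma>_def using RA'_refl by simp
  qed
  have nc_eq: "(u, w) \<in> RA' \<longleftrightarrow> (u, w) \<in> RA" if "(en, u) \<notin> RA" "(en, w) \<notin> RA" for u w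
  proof
    assume "(u, w) \<in> RA'"
    then show "(u, w) \<in> RA" using G3 that RA_sym by blast
  qed (rule RA_sub)
  have "card (V // RA') = card ((\<lambda>x. RA `` {\<sigma> x}) ` V)"
    unfolding quot_img
  proof (rule card_image_rel[OF finV])
    fix x y
    have "RA' `` {x} = RA' `` {y} \<longleftrightarrow> (x, y) \<in> RA'" by (rule RA'_class_eq)
    also have "\<dots> \<longleftrightarrow> (\<sigma> x, \<sigma> y) \<in> RA'"
    proof
      assume "(x, y) \<in> RA'"
      then show "(\<sigma> x, \<sigma> y) \<in> RA'" using sig_rel RA'_sym RA'_trans by blast
    next
      assume "(\<sigma> x, \<sigma> y) \<in> RA'"
      then show "(x, y) \<in> RA'" using sig_rel RA'_sym RA'_trans by blast
    qed
    also have "\<dots> \<longleftrightarrow> (\<sigma> x, \<sigma> y) \<in> RA" using nc_eq sig_nc by blast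
    also have "\<dots> \<longleftrightarrow> RA `` {\<sigma> x} = RA `` {\<sigma> y}" using RA_class_eq by blast
    finally show "(RA' `` {x} = RA' `` {y}) = (RA `` {\<sigma> x} = RA `` {\<sigma> y})" .
  qed
  also have "(\<lambda>x. RA `` {\<sigma> x}) ` V = (\<lambda>x. RA `` {x}) ` {x \<in> V. (en, x) \<notin> RA}"
  proof -
    have "\<sigma> ` V = {x \<in> V. (en, x) \<notin> RA}"
    proof
      show "\<sigma> ` V \<subseteq> {x \<in> V. (en, x) \<notin> RA}" using sig_nc e1V ne1 unfolding \<sigma>_def by auto
      show "{x \<in> V. (en, x) \<notin> RA} \<subseteq> \<sigma> ` V"
      proof
        fix x assume x: "x \<in> {x \<in> V. (en, x) \<notin> RA}"
        then have "\<sigma> x = x" unfolding \<sigma>_def by simp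
        then show "x \<in> \<sigma> ` V" using x by (metis (no_types, lifting) image_eqI mem_Collect_eq)
      qed
    qed
    then show ?thesis by (simp add: image_image[symmetric, of "\<lambda>x. RA `` {x}" \<sigma>])
  qed
  also have "\<dots> = V // RA - {RA `` {en}}"
  proof
    show "(\<lambda>x. RA `` {x}) ` {x \<in> V. (en, x) \<notin> RA} \<subseteq> V // RA - {RA `` {en}}"
    proof
      fix c assume "c \<in> (\<lambda>x. RA `` {x}) ` {x \<in> V. (en, x) \<notin> RA}"
      then obtain x where x: "x \<in> V" "(en, x) \<notin> RA" "c = RA `` {x}" by blast
      have "RA `` {x} \<noteq> RA `` {en}" using x(2) RA_class_eq RA_sym by blast
      then show "c \<in> V // RA - {RA `` {en}}" using x unfolding quot_img by blast
    qed
    show "V // RA - {RA `` {en}} \<subseteq> (\<lambda>x. RA `` {x}) ` {x \<in> V. (en, x) \<notin> RA}"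
    proof
      fix c assume "c \<in> V // RA - {RA `` {en}}"
      then obtain x where x: "x \<in> V" "c = RA `` {x}" "RA `` {x} \<noteq> RA `` {en}" unfolding quot_img by blast
      have "(en, x) \<notin> RA" using x(3) RA_class_eq RA_sym by blast
      then show "c \<in> (\<lambda>x. RA `` {x}) ` {x \<in> V. (en, x) \<notin> RA}" using x by blast
    qed
  qed
  finally have "card (V // RA') = card (V // RA - {RA `` {en}})" .
  moreover have "RA `` {en} \<in> V // RA" unfolding quot_img using enV by blast
  moreover have "finite (V // RA)" unfolding quot_img using finV by simp
  ultimately have "card (V // RA') + 1 = card (V // RA)"
    by (simp add: card_Diff_singleton) (metis One_nat_def Suc_pred card_gt_0_iff empty_iff)
  then show ?thesis using cB_eq by (simp add: num_components_def)
qed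

end




lemma dim_sub0:
  assumes "X \<subseteq> {0 :: 'c \<Rightarrow> 'k::field}"
  shows "fv.dim X = 0"
proof -
  have "fv.span X = fv.span {}"
    unfolding fv.span_eq using assms fv.span_zero by auto
  then have "fv.dim X = fv.dim ({} :: ('c \<Rightarrow> 'k) set)" by (rule fv.span_eq_dim)
  also have "\<dots> = 0" using fv.dim_eq_card_independent[OF fv.independent_empty] by simp
  finally show ?thesis .
qed

lemma N_zero:
  fixes V :: "'v set" and E :: "'a set"
  assumes short: "\<And>p. p \<in> basis_paths V E s t Z \<Longrightarrow> length (snd p) \<le> 1"
  shows "fv.dim ((col V E s t Z :: _ \<Rightarrow> _ \<Rightarrow> 'k::field) ` D1 V E s t Z) = 0"
proof (rule dim_sub0)
  show "(col V E s t Z :: _ \<Rightarrow> _ \<Rightarrow> 'k) ` D1 V E s t Z \<subseteq> {0}"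
  proof
    fix f assume "f \<in> (col V E s t Z :: _ \<Rightarrow> _ \<Rightarrow> 'k) ` D1 V E s t Z"
    then obtain d where d: "d \<in> D1 V E s t Z" "f = col V E s t Z d" by blast
    obtain e g where dd: "d = (e, g)" by (cases d)
    have dD: "d \<in> dom_basis V E s t Z" and ne: "snd g \<noteq> []" using d(1) unfolding D1_def dd by auto
    have "f = 0"
    proof (rule ext)
      fix c :: "'a \<times> ('v, 'a) qpath"
      obtain a p where cc: "c = (a, p)" by (cases c)
      have n1: "\<not> (p = (fst g, snd g @ [a]) \<and> p \<in> basis_paths V E s t Z)"
        using short[of "(fst g, snd g @ [a])"] ne by auto
      have n2: "\<not> (p = (s a, a # snd g) \<and> p \<in> basis_paths V E s t Z)"
        using short[of "(s a, a # snd g)"] ne by auto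
      have "delta0_coeff V E s t Z d c = (0::'k)"
        unfolding delta0_coeff_def dd cc Let_def using n1 n2 by auto
      then show "f c = 0 c" unfolding d(2) col_coeff[OF dD] by simp
    qed
    then show "f \<in> {0}" by simp
  qed
qed

lemma arrow_seq_app:
  assumes "arrow_seq E s t (xs @ [a])" "xs \<noteq> []"
  shows "t (last xs) = s a"
proof -
  let ?i = "length xs - 1"
  have "Suc ?i < length (xs @ [a])" using assms(2) by simp
  then have "t ((xs @ [a]) ! ?i) = s ((xs @ [a]) ! Suc ?i)" using assms(1) unfolding arrow_seq_def by blast
  moreover have "(xs @ [a]) ! ?i = last xs" using assms(2) by (simp add: nth_append last_conv_nth)
  moreover have "(xs @ [a]) ! Suc ?i = a" using assms(2) by (simp add: nth_append)
  ultimately show ?thesis by simp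
qed

lemma arrow_seq_cons:
  assumes "arrow_seq E s t (a # xs)" "xs \<noteq> []"
  shows "t a = s (hd xs)"
proof -
  have "Suc 0 < length (a # xs)" using assms(2) by simp
  then have "t ((a # xs) ! 0) = s ((a # xs) ! Suc 0)" using assms(1) unfolding arrow_seq_def by blast
  then show ?thesis using assms(2) by (simp add: hd_conv_nth)
qed

context glue_setup begin

lemma short_A:
  assumes rsz: "rad_square_zero E s t Z" and p: "p \<in> basis_paths V E s t Z"
  shows "length (snd p) \<le> 1"
proof (rule ccontr)
  assume "\<not> length (snd p) \<le> 1"
  then have i: "Suc 0 < length (snd p)" by simp
  have aseq: "arrow_seq E s t (snd p)" and av: "\<forall>z\<in>Z. \<not> contains_sub (snd p) z"
    using p unfolding basis_paths_def valid_path_def by auto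
  have sE: "set (snd p) \<subseteq> E" using aseq unfolding arrow_seq_def by simp
  have m0: "snd p ! 0 \<in> set (snd p)" using i by (intro nth_mem) linarith
  have m1: "snd p ! Suc 0 \<in> set (snd p)" using i by (intro nth_mem) simp
  have "snd p ! 0 \<in> E" "snd p ! Suc 0 \<in> E" using sE m0 m1 by auto
  moreover have "t (snd p ! 0) = s (snd p ! Suc 0)" using aseq i unfolding arrow_seq_def by blast
  ultimately have "[snd p ! 0, snd p ! Suc 0] \<in> Z" using rsz unfolding rad_square_zero_def by blast
  then show False using av contains_pair[OF i] by blast
qed

lemma short_B:
  assumes rsz: "rad_square_zero E s t Z" and p: "p \<in> basis_paths VB E sB tB ZB"
  shows "length (snd p) \<le> 1"
proof (rule ccontr)
  assume "\<not> length (snd p) \<le> 1"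
  then have i: "Suc 0 < length (snd p)" by simp
  have aseq: "arrow_seq E sB tB (snd p)" and av: "\<forall>z\<in>ZB. \<not> contains_sub (snd p) z"
    using p unfolding basis_paths_def valid_path_def by auto
  have sE: "set (snd p) \<subseteq> E" using aseq unfolding arrow_seq_def by simp
  have m0: "snd p ! 0 \<in> set (snd p)" using i by (intro nth_mem) linarith
  have m1: "snd p ! Suc 0 \<in> set (snd p)" using i by (intro nth_mem) simp
  have inE: "snd p ! 0 \<in> E" "snd p ! Suc 0 \<in> E" using sE m0 m1 by auto
  have eq: "gl (t (snd p ! 0)) = gl (s (snd p ! Suc 0))" using aseq i unfolding arrow_seq_def by auto
  have "[snd p ! 0, snd p ! Suc 0] \<in> ZB"
  proof (cases "t (snd p ! 0) = s (snd p ! Suc 0)")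
    case True
    then have "[snd p ! 0, snd p ! Suc 0] \<in> Z" using rsz inE unfolding rad_square_zero_def by blast
    then show ?thesis unfolding glue_Z_def by blast
  next
    case False
    then show ?thesis using ZB_new[OF inE eq] by blast
  qed
  then show False using av contains_pair[OF i] by blast
qed

lemma N_rsz:
  assumes rsz: "rad_square_zero E s t Z"
  shows "fv.dim ((col V E s t Z :: _ \<Rightarrow> _ \<Rightarrow> 'k::field) ` D1 V E s t Z)
       = fv.dim ((col VB E sB tB ZB :: _ \<Rightarrow> _ \<Rightarrow> 'k) ` D1 VB E sB tB ZB)"
proof -
  have "fv.dim ((col V E s t Z :: _ \<Rightarrow> _ \<Rightarrow> 'k) ` D1 V E s t Z) = 0" by (rule N_zero) (rule short_A[OF rsz])
  moreover have "fv.dim ((col VB E sB tB ZB :: _ \<Rightarrow> _ \<Rightarrow> 'k) ` D1 VB E sB tB ZB) = 0" by (rule N_zero) (rule short_B[OF rsz])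
  ultimately show ?thesis by simp
qed

end




context glue_setup begin

lemma gl_ne: "e \<noteq> e1 \<Longrightarrow> e \<noteq> en \<Longrightarrow> gl v = e \<longleftrightarrow> v = e"
  unfolding glue_v_def by auto

lemma basis_equiv:
  assumes snk: "\<forall>a\<in>E. s a \<noteq> en" and fp: "fst p \<noteq> en"
  shows "p \<in> basis_paths V E s t Z \<longleftrightarrow> p \<in> basis_paths VB E sB tB ZB"
proof
  assume p: "p \<in> basis_paths V E s t Z"
  have "gl (fst p) = fst p" using gl_simps(2)[OF fp] .
  then show "p \<in> basis_paths VB E sB tB ZB" using A_basis_B[OF p] by simp
next
  assume p: "p \<in> basis_paths VB E sB tB ZB"
  show "p \<in> basis_paths V E s t Z"
  proof (cases "snd p = []")
    case True
    have "fst p \<in> VB" using p unfolding basis_paths_def valid_path_def by simp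
    then have "fst p \<in> V" using VB_sub by blast
    then have "(fst p, []) \<in> basis_paths V E s t Z" by (rule triv_basis) (use Zlen in blast)
    then show ?thesis using True by (cases p) simp
  next
    case False
    have q: "(s (hd (snd p)), snd p) \<in> basis_paths V E s t Z" and g: "gl (s (hd (snd p))) = fst p"
      using B_basis_A[OF p False] by auto
    have "hd (snd p) \<in> E" using p False hd_in_set[OF False] unfolding basis_paths_def valid_path_def arrow_seq_def by auto
    then have "s (hd (snd p)) \<noteq> en" using snk by blast
    then have "s (hd (snd p)) = fst p" using g gl_simps(2) by simp
    then show ?thesis using q by (cases p) simp
  qed
qed

lemma D1A_sub:
  assumes src: "\<forall>a\<in>E. t a \<noteq> e1" and snk: "\<forall>a\<in>E. s a \<noteq> en"
    and d: "d \<in> D1 V E s t Z"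
  shows "d \<in> D1 VB E sB tB ZB \<and> (col V E s t Z d :: _ \<Rightarrow> 'k::field) = col VB E sB tB ZB d"
proof -
  obtain e g where dd: "d = (e, g)" by (cases d)
  have eV: "e \<in> V" and gB: "g \<in> basis_paths V E s t Z" and fg: "fst g = e" and pg: "pend t g = e"
    and ne: "snd g \<noteq> []"
    using d unfolding D1_def dom_basis_def dd by auto
  have sE: "set (snd g) \<subseteq> E" using gB unfolding basis_paths_def valid_path_def arrow_seq_def by auto
  have lastE: "last (snd g) \<in> E" using sE last_in_set[OF ne] by blast
  have hdE: "hd (snd g) \<in> E" using sE hd_in_set[OF ne] by blast
  have "t (last (snd g)) = e" using pg ne unfolding pend_def by simp
  then have ne1: "e \<noteq> e1" using src lastE by auto
  have "s (hd (snd g)) = e" using gB ne fg unfolding basis_paths_def valid_path_def by auto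
  then have nen: "e \<noteq> en" using snk hdE by auto
  have gBB: "g \<in> basis_paths VB E sB tB ZB" using basis_equiv[OF snk] fg nen gB by blast
  have eVB: "e \<in> VB" using eV nen unfolding glue_V_def by simp
  have pgB: "pend tB g = e" using pg ne gl_simps(2)[OF nen] unfolding pend_def by simp
  have dB: "d \<in> dom_basis VB E sB tB ZB" unfolding dd dom_basis_def using eVB gBB fg pgB by simp
  have dA: "d \<in> dom_basis V E s t Z" using d unfolding D1_def by simp
  have sBs: "sB a = s a" if "a \<in> E" for a using snk that gl_simps(2) by simp
  have "(col V E s t Z d :: _ \<Rightarrow> 'k) = col VB E sB tB ZB d"
    unfolding col_coeff[OF dA] col_coeff[OF dB]
  proof (rule ext)
    fix c :: "'a \<times> ('v, 'a) qpath"
    obtain a p where cc: "c = (a, p)" by (cases c)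
    have c1: "(a \<in> E \<and> s a = e \<and> p = (fst g, snd g @ [a]) \<and> p \<in> basis_paths V E s t Z)
       \<longleftrightarrow> (a \<in> E \<and> sB a = e \<and> p = (fst g, snd g @ [a]) \<and> p \<in> basis_paths VB E sB tB ZB)"
      using basis_equiv[OF snk, of p] fg nen sBs gl_simps(2)[OF nen] by auto
    have c2: "(a \<in> E \<and> t a = e \<and> p = (s a, a # snd g) \<and> p \<in> basis_paths V E s t Z)
       \<longleftrightarrow> (a \<in> E \<and> tB a = e \<and> p = (sB a, a # snd g) \<and> p \<in> basis_paths VB E sB tB ZB)"
      using basis_equiv[OF snk, of p] snk sBs gl_ne[OF ne1 nen] by auto
    show "(delta0_coeff V E s t Z d c :: 'k) = delta0_coeff VB E sB tB ZB d c"
      unfolding delta0_coeff_def dd cc Let_def using c1 c2 by simp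
  qed
  moreover have "d \<in> D1 VB E sB tB ZB" using dB ne unfolding D1_def dd by simp
  ultimately show ?thesis by simp
qed


lemma D1B_cases:
  assumes src: "\<forall>a\<in>E. t a \<noteq> e1" and snk: "\<forall>a\<in>E. s a \<noteq> en"
    and d: "d \<in> D1 VB E sB tB ZB"
  shows "(col VB E sB tB ZB d :: _ \<Rightarrow> 'k::field) = 0 \<or> d \<in> D1 V E s t Z"
proof -
  obtain e g where dd: "d = (e, g)" by (cases d)
  have eVB: "e \<in> VB" and gB: "g \<in> basis_paths VB E sB tB ZB" and fg: "fst g = e" and pg: "pend tB g = e"
    and ne: "snd g \<noteq> []"
    using d unfolding D1_def dom_basis_def dd by auto
  have dB: "d \<in> dom_basis VB E sB tB ZB" using d unfolding D1_def by simp
  have nen: "e \<noteq> en" using eVB unfolding glue_V_def by simp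
  have sE: "set (snd g) \<subseteq> E" using gB unfolding basis_paths_def valid_path_def arrow_seq_def by auto
  have lastE: "last (snd g) \<in> E" using sE last_in_set[OF ne] by blast
  have hdE: "hd (snd g) \<in> E" using sE hd_in_set[OF ne] by blast
  have glt: "gl (t (last (snd g))) = e" using pg ne unfolding pend_def by simp
  have gls: "gl (s (hd (snd g))) = e" using gB ne fg unfolding basis_paths_def valid_path_def by auto
  have sBs: "sB a = s a" if "a \<in> E" for a using snk that gl_simps(2) by simp
  show ?thesis
  proof (cases "e = e1")
    case False
    have gA: "g \<in> basis_paths V E s t Z" using basis_equiv[OF snk] fg nen gB by blast
    have "t (last (snd g)) = e" using glt gl_ne[OF False nen] by simp
    then have pA: "pend t g = e" using ne unfolding pend_def by simp
    have "e \<in> V" using eVB VB_sub by blast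
    then have "d \<in> D1 V E s t Z" unfolding D1_def dom_basis_def dd using gA fg pA ne by simp
    then show ?thesis by simp
  next
    case True
    have tl_en: "t (last (snd g)) = en"
    proof -
      have "t (last (snd g)) \<noteq> e1" using src lastE by blast
      then show ?thesis using glt True unfolding glue_v_def by (auto split: if_splits)
    qed
    have sh_e1: "s (hd (snd g)) = e1"
    proof -
      have "s (hd (snd g)) \<noteq> en" using snk hdE by blast
      then show ?thesis using gls True gl_simps(2) by simp
    qed
    have "(col VB E sB tB ZB d :: _ \<Rightarrow> 'k) = 0"
      unfolding col_coeff[OF dB]
    proof (rule ext)
      fix c :: "'a \<times> ('v, 'a) qpath"
      obtain a p where cc: "c = (a, p)" by (cases c)
      have n1: "\<not> (a \<in> E \<and> sB a = e \<and> p = (fst g, snd g @ [a]) \<and> p \<in> basis_paths VB E sB tB ZB)"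
      proof
        assume h: "a \<in> E \<and> sB a = e \<and> p = (fst g, snd g @ [a]) \<and> p \<in> basis_paths VB E sB tB ZB"
        have "p \<in> basis_paths V E s t Z" using basis_equiv[OF snk, of p] h fg nen by auto
        then have "arrow_seq E s t (snd g @ [a])" using h unfolding basis_paths_def valid_path_def by auto
        then have "t (last (snd g)) = s a" by (rule arrow_seq_app) (rule ne)
        then show False using tl_en snk h by auto
      qed
      have n2: "\<not> (a \<in> E \<and> tB a = e \<and> p = (sB a, a # snd g) \<and> p \<in> basis_paths VB E sB tB ZB)"
      proof
        assume h: "a \<in> E \<and> tB a = e \<and> p = (sB a, a # snd g) \<and> p \<in> basis_paths VB E sB tB ZB"
        have fp: "fst p = s a" using h sBs by auto
        have "s a \<noteq> en" using snk h by auto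
        then have "p \<in> basis_paths V E s t Z" using basis_equiv[OF snk, of p] h fp by auto
        then have "arrow_seq E s t (a # snd g)" using h unfolding basis_paths_def valid_path_def by auto
        then have "t a = s (hd (snd g))" by (rule arrow_seq_cons) (rule ne)
        then show False using sh_e1 src h by auto
      qed
      show "(delta0_coeff VB E sB tB ZB d c :: 'k) = 0 c"
        unfolding delta0_coeff_def dd cc Let_def using n1 n2 by simp
    qed
    then show ?thesis by simp
  qed
qed

lemma N_ss:
  assumes src: "\<forall>a\<in>E. t a \<noteq> e1" and snk: "\<forall>a\<in>E. s a \<noteq> en"
  shows "fv.dim ((col V E s t Z :: _ \<Rightarrow> _ \<Rightarrow> 'k::field) ` D1 V E s t Z)
       = fv.dim ((col VB E sB tB ZB :: _ \<Rightarrow> _ \<Rightarrow> 'k) ` D1 VB E sB tB ZB)"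
proof (rule fv.span_eq_dim)
  let ?A = "(col V E s t Z :: _ \<Rightarrow> _ \<Rightarrow> 'k) ` D1 V E s t Z"
  let ?B = "(col VB E sB tB ZB :: _ \<Rightarrow> _ \<Rightarrow> 'k) ` D1 VB E sB tB ZB"
  show "fv.span ?A = fv.span ?B"
    unfolding fv.span_eq
  proof
    show "?A \<subseteq> fv.span ?B"
    proof
      fix f assume "f \<in> ?A"
      then obtain d where d: "d \<in> D1 V E s t Z" "f = col V E s t Z d" by blast
      have "d \<in> D1 VB E sB tB ZB" "f = col VB E sB tB ZB d" using D1A_sub[where 'k='k, OF src snk d(1)] d(2) by auto
      then show "f \<in> fv.span ?B" by (intro fv.span_base) blast
    qed
    show "?B \<subseteq> fv.span ?A"
    proof
      fix f assume "f \<in> ?B"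
      then obtain d where d: "d \<in> D1 VB E sB tB ZB" "f = col VB E sB tB ZB d" by blast
      show "f \<in> fv.span ?A"
      proof (cases "(col VB E sB tB ZB d :: _ \<Rightarrow> 'k) = 0")
        case True then show ?thesis using d(2) fv.span_zero by simp
      next
        case False
        then have dA: "d \<in> D1 V E s t Z" using D1B_cases[OF src snk d(1)] by blast
        then have "f = col V E s t Z d" using D1A_sub[where 'k='k, OF src snk dA] d(2) by simp
        then show ?thesis using dA by (intro fv.span_base) blast
      qed
    qed
  qed
qed

end




context glue_setup begin

lemma main_dims:
  assumes cases: "(is_source E t e1 \<and> is_sink E s en) \<or> rad_square_zero E s t Z"
  shows "dim_im_delta0 (K::'k::field itself) V E s t Z
       = dim_im_delta0 K VB E sB tB ZB + (if (e1, en) \<in> adj_rel E s t then 1 else 0)"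
proof -
  have sA: "\<forall>a\<in>E. s a \<in> V" using sV by blast
  have zA: "\<forall>z\<in>Z. 2 \<le> length z" using Zlen by blast
  have sB': "\<forall>a\<in>E. sB a \<in> VB" using sB_VB by blast
  have zB: "\<forall>z\<in>ZB. 2 \<le> length z" using ZBlen by blast
  have finVB: "finite VB" using finV VB_sub finite_subset by blast
  have A: "dim_im_delta0 K V E s t Z
     = fv.dim ((inc E s t :: _ \<Rightarrow> _ \<Rightarrow> 'k) ` V) + fv.dim ((col V E s t Z :: _ \<Rightarrow> _ \<Rightarrow> 'k) ` D1 V E s t Z)"
    by (rule split_dim[OF finite_D_A finV sA zA])
  have B: "dim_im_delta0 K VB E sB tB ZB
     = fv.dim ((inc E sB tB :: _ \<Rightarrow> _ \<Rightarrow> 'k) ` VB) + fv.dim ((col VB E sB tB ZB :: _ \<Rightarrow> _ \<Rightarrow> 'k) ` D1 VB E sB tB ZB)"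
    by (rule split_dim[OF finite_D_B finVB sB' zB])
  have N: "fv.dim ((col V E s t Z :: _ \<Rightarrow> _ \<Rightarrow> 'k) ` D1 V E s t Z)
       = fv.dim ((col VB E sB tB ZB :: _ \<Rightarrow> _ \<Rightarrow> 'k) ` D1 VB E sB tB ZB)"
    using cases
  proof (elim disjE conjE)
    assume "is_source E t e1" "is_sink E s en"
    then show ?thesis using N_ss unfolding is_source_def is_sink_def by blast
  next
    assume "rad_square_zero E s t Z"
    then show ?thesis by (rule N_rsz)
  qed
  have T: "fv.dim ((inc E s t :: _ \<Rightarrow> _ \<Rightarrow> 'k) ` V)
   = fv.dim ((inc E sB tB :: _ \<Rightarrow> _ \<Rightarrow> 'k) ` VB) + (if (e1, en) \<in> adj_rel E s t then 1 else 0)"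
    by (rule T_main)
  show ?thesis unfolding A B N T by simp
qed

end

theorem corollary3p10:
  fixes V :: "'v set" and E :: "'a set" and s t :: "'a \<Rightarrow> 'v" and Z :: "'a list set"
    and e1 en :: 'v and K :: "'k::field itself"
  assumes mono: "monomial_data V E s t Z"
    and e1V: "e1 \<in> V" and enV: "en \<in> V" and dist: "e1 \<noteq> en"
    and ni1: "\<not> isolated E s t e1" and nin: "\<not> isolated E s t en"
    and cases: "(is_source E t e1 \<and> is_sink E s en) \<or> rad_square_zero E s t Z"
  defines "sB \<equiv> glue_v e1 en \<circ> s" and "tB \<equiv> glue_v e1 en \<circ> t"
    and "VB \<equiv> glue_V V e1 en" and "ZB \<equiv> glue_Z E s t Z e1 en"
  shows "int (dim_im_delta0 K V E s t Z)
           = int (dim_im_delta0 K VB E sB tB ZB) + 1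
             + int (num_components VB E sB tB) - int (num_components V E s t)
         \<and> ((e1, en) \<in> adj_rel E s t \<longrightarrow>
              dim_im_delta0 K V E s t Z = dim_im_delta0 K VB E sB tB ZB + 1)
         \<and> ((e1, en) \<notin> adj_rel E s t \<longrightarrow>
              dim_im_delta0 K V E s t Z = dim_im_delta0 K VB E sB tB ZB)"
proof -
  interpret G: glue_setup V E s t Z e1 en
    by unfold_locales (rule mono, rule e1V, rule enV, rule dist)
  have D: "dim_im_delta0 K V E s t Z
       = dim_im_delta0 K VB E sB tB ZB + (if (e1, en) \<in> adj_rel E s t then 1 else 0)"
    unfolding sB_def tB_def VB_def ZB_def by (rule G.main_dims[OF cases])
  show ?thesis
  proof (cases "(e1, en) \<in> adj_rel E s t")
    case True
    have "num_components VB E sB tB = num_components V E s t"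
      unfolding sB_def tB_def VB_def by (rule G.conn_case[OF True])
    then show ?thesis using D True by simp
  next
    case False
    have "num_components V E s t = num_components VB E sB tB + 1"
      unfolding sB_def tB_def VB_def by (rule G.disconn_case[OF False])
    then show ?thesis using D False by simp
  qed
qed



end
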